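(* Consider the sparse linear Gaussian model: $S\in\{1,\dots,N\}$, $\mathcal{X}_S=\{\mathbf{x}\in\mathbb{R}^N:\|\mathbf{x}\|_0\le S\}$, $\sigma>0$, observation $\mathbf{y}=\mathbf{H}\mathbf{x}+\mathbf{n}$, $\mathbf{n}\sim\mathcal{N}(\mathbf{0},\sigma^2\mathbf{I})$, parameter function $g(\mathbf{x})=x_k$ for fixed $k\in[N]$, where $\mathbf{H}\in\mathbb{R}^{M\times N}$ with $M\le N$ satisfies the restricted isometry property of order $S$ with RIP constant $\delta_S<1$. Let $\mathbf{x}_0\in\mathcal{X}_S$ and $\mathcal{K}=\{k_1,\dots,k_{|\mathcal{K}|}\}\subseteq[N]$ with $|\mathcal{K}|\le S$. Let $\mathbf{P}=\mathbf{H}_{\mathcal{K}}(\mathbf{H}_{\mathcal{K}})^{\dagger}$ and $\widetilde{\mathbf{x}}_0$ the unique vector with $\operatorname{supp}(\widetilde{\mathbf{x}}_0)\subseteq\mathcal{K}$ and $\mathbf{H}\widetilde{\mathbf{x}}_0=\mathbf{P}\mathbf{H}\mathbf{x}_0$. Let $c:\mathcal{X}_S\to\mathbb{R}$ be a bias function whose partial derivatives $\frac{\partial c(\mathbf{x})}{\partial x_l}\big|_{\mathbf{x}=\widetilde{\mathbf{x}}_0}$ exist for all $l\in\mathcal{K}$, and let $(\mathbf{b}_{\mathbf{x}_0})_i=\delta_{k,k_i}+\frac{\partial c(\mathbf{x})}{\partial x_{k_i}}\big|_{\mathbf{x}=\widetilde{\mathbf{x}}_0}$, $i\in[|\mathcal{K}|]$.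 Then $$M(c,\mathbf{x}_0)\ \ge\ \exp\Big(-\tfrac{1+\delta_S}{\sigma^2}\big\|\mathbf{x}_0^{\operatorname{supp}(\mathbf{x}_0)\setminus\mathcal{K}}\big\|_2^2\Big)\,\sigma^2\,\mathbf{b}_{\mathbf{x}_0}^T(\mathbf{H}_{\mathcal{K}}^T\mathbf{H}_{\mathcal{K}})^{-1}\mathbf{b}_{\mathbf{x}_0}.$$
   Context: RIP of order $K$ with constant $\delta_K$: $\delta_K$ is the smallest $\delta\ge0$ such that $(1-\delta)\|\mathbf{z}\|_2^2\le\|\mathbf{H}_{\mathcal{I}}\mathbf{z}\|_2^2\le(1+\delta)\|\mathbf{z}\|_2^2$ for all $\mathcal{I}\subseteq[N]$ with $|\mathcal{I}|=K$ and all $\mathbf{z}\in\mathbb{R}^K$. $\mathbf{H}_{\mathcal{K}}$ = columns of $\mathbf{H}$ indexed by $\mathcal{K}$; for an index set $\mathcal{I}$, $\mathbf{x}^{\mathcal{I}}$ is $\mathbf{x}$ with all entries outside $\mathcal{I}$ set to zero; $\dagger$ = pseudoinverse; $\delta_{k,l}$ = Kronecker delta. An estimator $\hat g:\mathbb{R}^M\to\mathbb{R}$ has bias $\mathsf{E}_{\mathbf{x}}\{\hat g(\mathbf{y})\}-x_k$ and variance $v(\hat g;\mathbf{x})$; $M(c,\mathbf{x}_0)$ is the infimum of $v(\hat g;\mathbf{x}_0)$ over estimators with finite variance at $\mathbf{x}_0$ and bias equal to $c$ on all of $\mathcal{X}_S$ ($+\infty$ if none). *)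

theory Defs
  imports "HOL-Probability.Probability" "Jordan_Normal_Form.Matrix"
begin

text \<open>Observations y in R^M are represented as functions nat => real on the index set {..<M}
  (elements of the product measure space).\<close>

definition supp_vec :: "real vec \<Rightarrow> nat set" where
  "supp_vec x = {i. i < dim_vec x \<and> x $ i \<noteq> 0}"

definition sparse_set :: "nat \<Rightarrow> nat \<Rightarrow> real vec set" where
  "sparse_set N S = {x \<in> carrier_vec N. card (supp_vec x) \<le> S}"

definition restrict_vec :: "real vec \<Rightarrow> nat set \<Rightarrow> real vec" where
  "restrict_vec x I = vec (dim_vec x) (\<lambda>i. if i \<in> I then x $ i else 0)"

text \<open>H_I z is written as H applied to the zero-padded vector supported on I.\<close>
definition rip_const :: "real mat \<Rightarrow> nat \<Rightarrow> real" where
  "rip_const H K = Inf {\<delta>. \<delta> \<ge> 0 \<and>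
     (\<forall>I. I \<subseteq> {..<dim_col H} \<and> card I = K \<longrightarrow>
        (\<forall>z \<in> carrier_vec (dim_col H). (\<forall>i<dim_col H. i \<notin> I \<longrightarrow> z $ i = 0) \<longrightarrow>
           (1 - \<delta>) * (scalar_prod z z) \<le> scalar_prod (H *\<^sub>v z) (H *\<^sub>v z) \<and>
           scalar_prod (H *\<^sub>v z) (H *\<^sub>v z) \<le> (1 + \<delta>) * (scalar_prod z z)))}"

definition col_submat :: "real mat \<Rightarrow> nat list \<Rightarrow> real mat" where
  "col_submat H ks = mat (dim_row H) (length ks) (\<lambda>(i, j). H $$ (i, ks ! j))"

definition pinv_mat :: "real mat \<Rightarrow> real mat" where
  "pinv_mat A = (THE B. B \<in> carrier_mat (dim_col A) (dim_row A) \<and>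
      A * B * A = A \<and> B * A * B = B \<and>
      transpose_mat (A * B) = A * B \<and> transpose_mat (B * A) = B * A)"

definition inv_mat :: "real mat \<Rightarrow> real mat" where
  "inv_mat A = (THE B. B \<in> carrier_mat (dim_row A) (dim_row A) \<and>
      A * B = 1\<^sub>m (dim_row A) \<and> B * A = 1\<^sub>m (dim_row A))"

definition obs_dist :: "real mat \<Rightarrow> real \<Rightarrow> real vec \<Rightarrow> (nat \<Rightarrow> real) measure" where
  "obs_dist H \<sigma> x = PiM {..<dim_row H} (\<lambda>i. density lborel (normal_density ((H *\<^sub>v x) $ i) \<sigma>))"

definition estimators :: "nat \<Rightarrow> ((nat \<Rightarrow> real) \<Rightarrow> real) set" where
  "estimators M = borel_measurable (PiM {..<M} (\<lambda>_. lborel))"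

definition est_mean :: "real mat \<Rightarrow> real \<Rightarrow> ((nat \<Rightarrow> real) \<Rightarrow> real) \<Rightarrow> real vec \<Rightarrow> real" where
  "est_mean H \<sigma> g x = (\<integral>y. g y \<partial>obs_dist H \<sigma> x)"

definition est_bias :: "real mat \<Rightarrow> real \<Rightarrow> nat \<Rightarrow> ((nat \<Rightarrow> real) \<Rightarrow> real) \<Rightarrow> real vec \<Rightarrow> real" where
  "est_bias H \<sigma> k g x = est_mean H \<sigma> g x - x $ k"

definition est_var :: "real mat \<Rightarrow> real \<Rightarrow> ((nat \<Rightarrow> real) \<Rightarrow> real) \<Rightarrow> real vec \<Rightarrow> real" where
  "est_var H \<sigma> g x = (\<integral>y. (g y - est_mean H \<sigma> g x)\<^sup>2 \<partial>obs_dist H \<sigma> x)"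

definition finite_var :: "real mat \<Rightarrow> real \<Rightarrow> ((nat \<Rightarrow> real) \<Rightarrow> real) \<Rightarrow> real vec \<Rightarrow> bool" where
  "finite_var H \<sigma> g x \<longleftrightarrow> integrable (obs_dist H \<sigma> x) g \<and>
      integrable (obs_dist H \<sigma> x) (\<lambda>y. (g y)\<^sup>2)"

text \<open>M(c, x0): infimum of the variance at x0 over estimators with finite variance at x0
  and bias equal to c on all of X_S (Inf of the empty set is +infinity).\<close>
definition min_var :: "real mat \<Rightarrow> real \<Rightarrow> nat \<Rightarrow> nat \<Rightarrow> (real vec \<Rightarrow> real) \<Rightarrow> real vec \<Rightarrow> ereal" where
  "min_var H \<sigma> S k c x0 = Inf ((\<lambda>g. ereal (est_var H \<sigma> g x0)) `
     {g \<in> estimators (dim_row H). finite_var H \<sigma> g x0 \<and>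
        (\<forall>x \<in> sparse_set (dim_col H) S. integrable (obs_dist H \<sigma> x) g \<and>
            est_bias H \<sigma> k g x = c x)})"

definition partial_at :: "(real vec \<Rightarrow> real) \<Rightarrow> real vec \<Rightarrow> nat \<Rightarrow> real" where
  "partial_at c x l = deriv (\<lambda>t. c (x + t \<cdot>\<^sub>v unit_vec (dim_vec x) l)) 0"

definition has_partial_at :: "(real vec \<Rightarrow> real) \<Rightarrow> real vec \<Rightarrow> nat \<Rightarrow> bool" where
  "has_partial_at c x l \<longleftrightarrow> (\<lambda>t. c (x + t \<cdot>\<^sub>v unit_vec (dim_vec x) l)) differentiable (at 0)"

end

theory Submission
  imports Defs "Jordan_Normal_Form.Determinant"
begin

unbundle no vec_syntax


definition QQ :: "real \<Rightarrow> nat \<Rightarrow> (nat \<Rightarrow> real) \<Rightarrow> (nat \<Rightarrow> real) measure" where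
  "QQ \<sigma> m \<mu> = PiM {..<m} (\<lambda>i. density lborel (normal_density (\<mu> i) \<sigma>))"

definition LR :: "real \<Rightarrow> nat \<Rightarrow> (nat \<Rightarrow> real) \<Rightarrow> (nat \<Rightarrow> real) \<Rightarrow> (nat \<Rightarrow> real) \<Rightarrow> real" where
  "LR \<sigma> m \<mu> \<mu>0 y = (\<Prod>i<m. normal_density (\<mu> i) \<sigma> (y i) / normal_density (\<mu>0 i) \<sigma> (y i))"

lemma psf: "0 < \<sigma> \<Longrightarrow> product_sigma_finite (\<lambda>i. density lborel (normal_density (\<mu> i) \<sigma>))"
  unfolding product_sigma_finite_def
  using prob_space_normal_density prob_space_imp_sigma_finite by blast

lemma sets_QQ[measurable_cong]: "sets (QQ \<sigma> m \<mu>) = sets (PiM {..<m} (\<lambda>_. lborel))"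
  unfolding QQ_def by (intro sets_PiM_cong) auto

lemma LR_meas[measurable]: "LR \<sigma> m \<mu> \<mu>0 \<in> borel_measurable (PiM {..<m} (\<lambda>_. lborel))"
  unfolding LR_def by measurable

lemma LR_nonneg: "0 \<le> LR \<sigma> m \<mu> \<mu>0 y"
  unfolding LR_def by (intro prod_nonneg) auto

lemma indicator_PiE_prod:
  assumes "finite I" "y \<in> extensional I"
  shows "indicator (PiE I A) y = (\<Prod>i\<in>I. indicator (A i) (y i) :: ennreal)"
proof (cases "y \<in> PiE I A")
  case True
  then show ?thesis by (auto simp: PiE_iff intro!: prod.neutral[symmetric])
next
  case False
  then obtain i where "i \<in> I" "y i \<notin> A i" using assms by (auto simp: PiE_iff)
  then have "(\<Prod>i\<in>I. indicator (A i) (y i) :: ennreal) = 0" using assms(1) by (intro prod_zero) (auto intro!: bexI[of _ i])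
  then show ?thesis using False by simp
qed

lemma QQ_density:
  assumes s: "0 < \<sigma>"
  shows "QQ \<sigma> m \<mu> = density (QQ \<sigma> m \<mu>0) (\<lambda>y. ennreal (LR \<sigma> m \<mu> \<mu>0 y))"
proof -
  interpret P: product_sigma_finite "\<lambda>i. density lborel (normal_density (\<mu> i) \<sigma>)" using psf s .
  interpret P0: product_sigma_finite "\<lambda>i. density lborel (normal_density (\<mu>0 i) \<sigma>)" using psf s .
  have "density (QQ \<sigma> m \<mu>0) (\<lambda>y. ennreal (LR \<sigma> m \<mu> \<mu>0 y)) = QQ \<sigma> m \<mu>"
    unfolding QQ_def
  proof (rule P.PiM_eqI)
    show "finite {..<m}" by simp
    show "sets (density (PiM {..<m} (\<lambda>i. density lborel (normal_density (\<mu>0 i) \<sigma>))) (\<lambda>y. ennreal (LR \<sigma> m \<mu> \<mu>0 y)))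
       = sets (PiM {..<m} (\<lambda>i. density lborel (normal_density (\<mu> i) \<sigma>)))"
      by (simp, intro sets_PiM_cong) auto
    fix A assume A: "\<And>i. i \<in> {..<m} \<Longrightarrow> A i \<in> sets (density lborel (normal_density (\<mu> i) \<sigma>))"
    have Ab[measurable]: "A i \<in> sets borel" if "i \<in> {..<m}" for i using A[OF that] by simp
    have PA[measurable]: "PiE {..<m} A \<in> sets (PiM {..<m} (\<lambda>i. density lborel (normal_density (\<mu>0 i) \<sigma>)))"
      using Ab by (intro sets_PiM_I_finite) auto
    have "emeasure (density (PiM {..<m} (\<lambda>i. density lborel (normal_density (\<mu>0 i) \<sigma>))) (\<lambda>y. ennreal (LR \<sigma> m \<mu> \<mu>0 y))) (PiE {..<m} A)
      = \<integral>\<^sup>+ y. ennreal (LR \<sigma> m \<mu> \<mu>0 y) * indicator (PiE {..<m} A) y \<partial>(PiM {..<m} (\<lambda>i. density lborel (normal_density (\<mu>0 i) \<sigma>)))"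
      by (rule emeasure_density[OF _ PA]) measurable
    also have "\<dots> = \<integral>\<^sup>+ y. (\<Prod>i<m. ennreal (normal_density (\<mu> i) \<sigma> (y i) / normal_density (\<mu>0 i) \<sigma> (y i)) * indicator (A i) (y i)) \<partial>(PiM {..<m} (\<lambda>i. density lborel (normal_density (\<mu>0 i) \<sigma>)))"
    proof (intro nn_integral_cong)
      fix y assume "y \<in> space (PiM {..<m} (\<lambda>i. density lborel (normal_density (\<mu>0 i) \<sigma>)))"
      then have "y \<in> extensional {..<m}" by (auto simp: space_PiM PiE_iff)
      then show "ennreal (LR \<sigma> m \<mu> \<mu>0 y) * indicator (PiE {..<m} A) y = (\<Prod>i<m. ennreal (normal_density (\<mu> i) \<sigma> (y i) / normal_density (\<mu>0 i) \<sigma> (y i)) * indicator (A i) (y i))"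
        unfolding LR_def by (simp add: indicator_PiE_prod prod.distrib prod_ennreal)
    qed
    also have "\<dots> = (\<Prod>i<m. \<integral>\<^sup>+ t. ennreal (normal_density (\<mu> i) \<sigma> t / normal_density (\<mu>0 i) \<sigma> t) * indicator (A i) t \<partial>density lborel (normal_density (\<mu>0 i) \<sigma>))"
    proof (rule P0.product_nn_integral_prod)
      fix i assume "i \<in> {..<m}"
      then have [measurable]: "A i \<in> sets borel" by (rule Ab)
      show "(\<lambda>t. ennreal (normal_density (\<mu> i) \<sigma> t / normal_density (\<mu>0 i) \<sigma> t) * indicator (A i) t) \<in> borel_measurable (density lborel (normal_density (\<mu>0 i) \<sigma>))"
        by measurable
    qed simp
    also have "\<dots> = (\<Prod>i<m. emeasure (density lborel (normal_density (\<mu> i) \<sigma>)) (A i))"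
    proof (intro prod.cong refl)
      fix i assume i: "i \<in> {..<m}"
      have "(\<integral>\<^sup>+ t. ennreal (normal_density (\<mu> i) \<sigma> t / normal_density (\<mu>0 i) \<sigma> t) * indicator (A i) t \<partial>density lborel (normal_density (\<mu>0 i) \<sigma>))
        = (\<integral>\<^sup>+ t. ennreal (normal_density (\<mu>0 i) \<sigma> t) * (ennreal (normal_density (\<mu> i) \<sigma> t / normal_density (\<mu>0 i) \<sigma> t) * indicator (A i) t) \<partial>lborel)"
        using i by (intro nn_integral_density) auto
      also have "\<dots> = (\<integral>\<^sup>+ t. ennreal (normal_density (\<mu> i) \<sigma> t) * indicator (A i) t \<partial>lborel)"
      proof (intro nn_integral_cong)
        fix t
        have "normal_density (\<mu>0 i) \<sigma> t > 0" using s by (rule normal_density_pos)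
        then show "ennreal (normal_density (\<mu>0 i) \<sigma> t) * (ennreal (normal_density (\<mu> i) \<sigma> t / normal_density (\<mu>0 i) \<sigma> t) * indicator (A i) t)
          = ennreal (normal_density (\<mu> i) \<sigma> t) * indicator (A i) t"
          by (simp add: mult.assoc[symmetric] ennreal_mult[symmetric])
      qed
      also have "\<dots> = emeasure (density lborel (normal_density (\<mu> i) \<sigma>)) (A i)"
        using i by (intro emeasure_density[symmetric]) auto
      finally show "(\<integral>\<^sup>+ t. ennreal (normal_density (\<mu> i) \<sigma> t / normal_density (\<mu>0 i) \<sigma> t) * indicator (A i) t \<partial>density lborel (normal_density (\<mu>0 i) \<sigma>))
        = emeasure (density lborel (normal_density (\<mu> i) \<sigma>)) (A i)" .
    qed
    finally show "emeasure (density (PiM {..<m} (\<lambda>i. density lborel (normal_density (\<mu>0 i) \<sigma>))) (\<lambda>y. ennreal (LR \<sigma> m \<mu> \<mu>0 y))) (PiE {..<m} A)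
      = (\<Prod>i\<in>{..<m}. emeasure (density lborel (normal_density (\<mu> i) \<sigma>)) (A i))" .
  qed
  then show ?thesis by simp
qed

lemma nd_prod:
  assumes s: "0 < \<sigma>"
  shows "normal_density a \<sigma> t * normal_density b \<sigma> t / normal_density c \<sigma> t
     = exp ((a - c) * (b - c) / \<sigma>\<^sup>2) * normal_density (a + b - c) \<sigma> t"
proof -
  define q where "q = sqrt (2 * pi * \<sigma>\<^sup>2)"
  have q: "q > 0" using s by (simp add: q_def)
  have e: "-(t - a)\<^sup>2 / (2 * \<sigma>\<^sup>2) + -(t - b)\<^sup>2 / (2 * \<sigma>\<^sup>2) - -(t - c)\<^sup>2 / (2 * \<sigma>\<^sup>2)
     = (a - c) * (b - c) / \<sigma>\<^sup>2 + -(t - (a + b - c))\<^sup>2 / (2 * \<sigma>\<^sup>2)"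
    using s by (simp add: field_simps power2_eq_square)
  have "normal_density a \<sigma> t * normal_density b \<sigma> t / normal_density c \<sigma> t
     = (1/q) * (exp (-(t - a)\<^sup>2 / (2 * \<sigma>\<^sup>2)) * exp (-(t - b)\<^sup>2 / (2 * \<sigma>\<^sup>2)) / exp (-(t - c)\<^sup>2 / (2 * \<sigma>\<^sup>2)))"
  proof -
    have gen: "\<And>X Y Z. Z \<noteq> 0 \<Longrightarrow> (1/q*X)*(1/q*Y)/(1/q*Z) = 1/q*(X*Y/Z)" using q by (simp add: field_simps power2_eq_square)
    show ?thesis unfolding normal_density_def q_def[symmetric] by (rule gen) simp
  qed
  also have "\<dots> = (1/q) * exp ((a - c) * (b - c) / \<sigma>\<^sup>2 + -(t - (a + b - c))\<^sup>2 / (2 * \<sigma>\<^sup>2))"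
    unfolding e[symmetric] by (simp only: exp_add exp_diff)
  also have "\<dots> = exp ((a - c) * (b - c) / \<sigma>\<^sup>2) * normal_density (a + b - c) \<sigma> t"
    unfolding normal_density_def q_def[symmetric] by (simp only: exp_add) simp
  finally show ?thesis .
qed

lemma nn_integral_nd: "0 < \<sigma> \<Longrightarrow> (\<integral>\<^sup>+ t. ennreal (normal_density a \<sigma> t) \<partial>lborel) = 1"
  by (subst nn_integral_eq_integral) auto

lemma LR_LR_nn:
  assumes s: "0 < \<sigma>"
  shows "(\<integral>\<^sup>+ y. ennreal (LR \<sigma> m \<mu> \<mu>0 y * LR \<sigma> m \<mu>' \<mu>0 y) \<partial>QQ \<sigma> m \<mu>0)
     = ennreal (exp (\<Sum>i<m. (\<mu> i - \<mu>0 i) * (\<mu>' i - \<mu>0 i) / \<sigma>\<^sup>2))"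
proof -
  interpret P0: product_sigma_finite "\<lambda>i. density lborel (normal_density (\<mu>0 i) \<sigma>)" using psf s .
  have "(\<integral>\<^sup>+ y. ennreal (LR \<sigma> m \<mu> \<mu>0 y * LR \<sigma> m \<mu>' \<mu>0 y) \<partial>QQ \<sigma> m \<mu>0)
    = (\<integral>\<^sup>+ y. (\<Prod>i<m. ennreal (normal_density (\<mu> i) \<sigma> (y i) / normal_density (\<mu>0 i) \<sigma> (y i) * (normal_density (\<mu>' i) \<sigma> (y i) / normal_density (\<mu>0 i) \<sigma> (y i)))) \<partial>QQ \<sigma> m \<mu>0)"
    unfolding LR_def by (intro nn_integral_cong) (simp add: prod_ennreal prod.distrib[symmetric])
  also have "\<dots> = (\<Prod>i<m. \<integral>\<^sup>+ t. ennreal (normal_density (\<mu> i) \<sigma> t / normal_density (\<mu>0 i) \<sigma> t * (normal_density (\<mu>' i) \<sigma> t / normal_density (\<mu>0 i) \<sigma> t)) \<partial>density lborel (normal_density (\<mu>0 i) \<sigma>))"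
    unfolding QQ_def by (rule P0.product_nn_integral_prod) auto
  also have "\<dots> = (\<Prod>i<m. ennreal (exp ((\<mu> i - \<mu>0 i) * (\<mu>' i - \<mu>0 i) / \<sigma>\<^sup>2)))"
  proof (intro prod.cong refl)
    fix i
    have "(\<integral>\<^sup>+ t. ennreal (normal_density (\<mu> i) \<sigma> t / normal_density (\<mu>0 i) \<sigma> t * (normal_density (\<mu>' i) \<sigma> t / normal_density (\<mu>0 i) \<sigma> t)) \<partial>density lborel (normal_density (\<mu>0 i) \<sigma>))
      = (\<integral>\<^sup>+ t. ennreal (normal_density (\<mu>0 i) \<sigma> t) * ennreal (normal_density (\<mu> i) \<sigma> t / normal_density (\<mu>0 i) \<sigma> t * (normal_density (\<mu>' i) \<sigma> t / normal_density (\<mu>0 i) \<sigma> t)) \<partial>lborel)"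
      by (intro nn_integral_density) auto
    also have "\<dots> = (\<integral>\<^sup>+ t. ennreal (exp ((\<mu> i - \<mu>0 i) * (\<mu>' i - \<mu>0 i) / \<sigma>\<^sup>2)) * ennreal (normal_density (\<mu> i + \<mu>' i - \<mu>0 i) \<sigma> t) \<partial>lborel)"
    proof (intro nn_integral_cong)
      fix t
      have p: "normal_density (\<mu>0 i) \<sigma> t > 0" using s by (rule normal_density_pos)
      have "normal_density (\<mu>0 i) \<sigma> t * (normal_density (\<mu> i) \<sigma> t / normal_density (\<mu>0 i) \<sigma> t * (normal_density (\<mu>' i) \<sigma> t / normal_density (\<mu>0 i) \<sigma> t))
        = normal_density (\<mu> i) \<sigma> t * normal_density (\<mu>' i) \<sigma> t / normal_density (\<mu>0 i) \<sigma> t"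
        using p by (simp add: field_simps power2_eq_square)
      also have "\<dots> = exp ((\<mu> i - \<mu>0 i) * (\<mu>' i - \<mu>0 i) / \<sigma>\<^sup>2) * normal_density (\<mu> i + \<mu>' i - \<mu>0 i) \<sigma> t"
        using s by (rule nd_prod)
      finally show "ennreal (normal_density (\<mu>0 i) \<sigma> t) * ennreal (normal_density (\<mu> i) \<sigma> t / normal_density (\<mu>0 i) \<sigma> t * (normal_density (\<mu>' i) \<sigma> t / normal_density (\<mu>0 i) \<sigma> t))
        = ennreal (exp ((\<mu> i - \<mu>0 i) * (\<mu>' i - \<mu>0 i) / \<sigma>\<^sup>2)) * ennreal (normal_density (\<mu> i + \<mu>' i - \<mu>0 i) \<sigma> t)"
        using p by (simp add: ennreal_mult[symmetric])
    qed
    also have "\<dots> = ennreal (exp ((\<mu> i - \<mu>0 i) * (\<mu>' i - \<mu>0 i) / \<sigma>\<^sup>2))"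
      using s by (simp add: nn_integral_cmult nn_integral_nd)
    finally show "(\<integral>\<^sup>+ t. ennreal (normal_density (\<mu> i) \<sigma> t / normal_density (\<mu>0 i) \<sigma> t * (normal_density (\<mu>' i) \<sigma> t / normal_density (\<mu>0 i) \<sigma> t)) \<partial>density lborel (normal_density (\<mu>0 i) \<sigma>))
      = ennreal (exp ((\<mu> i - \<mu>0 i) * (\<mu>' i - \<mu>0 i) / \<sigma>\<^sup>2))" .
  qed
  also have "\<dots> = ennreal (exp (\<Sum>i<m. (\<mu> i - \<mu>0 i) * (\<mu>' i - \<mu>0 i) / \<sigma>\<^sup>2))"
    by (simp add: prod_ennreal exp_sum)
  finally show ?thesis .
qed

lemma LR_LR_int:
  assumes s: "0 < \<sigma>"
  shows "has_bochner_integral (QQ \<sigma> m \<mu>0) (\<lambda>y. LR \<sigma> m \<mu> \<mu>0 y * LR \<sigma> m \<mu>' \<mu>0 y)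
     (exp (\<Sum>i<m. (\<mu> i - \<mu>0 i) * (\<mu>' i - \<mu>0 i) / \<sigma>\<^sup>2))"
  by (rule has_bochner_integral_nn_integral) (auto simp: LR_LR_nn[OF s] LR_nonneg)

lemma quad_disc:
  fixes A B C :: real
  assumes q: "\<And>l. 0 \<le> A - 2 * l * B + l\<^sup>2 * C" and C: "0 \<le> C"
  shows "B\<^sup>2 \<le> A * C"
proof (cases "C = 0")
  case True
  show ?thesis
  proof (cases "B = 0")
    case False
    have "0 \<le> A - 2 * ((A + 1) / (2 * B)) * B + ((A + 1) / (2 * B))\<^sup>2 * C" by (rule q)
    then show ?thesis using False True by (simp add: field_simps)
  qed (use True in simp)
next
  case False
  then have Cp: "C > 0" using C by simp
  have "0 \<le> A - 2 * (B / C) * B + (B / C)\<^sup>2 * C" by (rule q)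
  then have "0 \<le> (A - 2 * (B / C) * B + (B / C)\<^sup>2 * C) * C" using Cp by simp
  also have "\<dots> = A * C - B\<^sup>2" using Cp by (simp add: field_simps power2_eq_square)
  finally show ?thesis by simp
qed

lemma CS_int:
  fixes f h :: "'a \<Rightarrow> real"
  assumes i1: "integrable N (\<lambda>x. (f x)\<^sup>2)" and i2: "integrable N (\<lambda>x. (h x)\<^sup>2)"
    and i3: "integrable N (\<lambda>x. f x * h x)"
  shows "(\<integral>x. f x * h x \<partial>N)\<^sup>2 \<le> (\<integral>x. (f x)\<^sup>2 \<partial>N) * (\<integral>x. (h x)\<^sup>2 \<partial>N)"
proof (rule quad_disc)
  fix l :: real
  have "0 \<le> (\<integral>x. (f x - l * h x)\<^sup>2 \<partial>N)" by simp
  also have "(\<integral>x. (f x - l * h x)\<^sup>2 \<partial>N) = (\<integral>x. (f x)\<^sup>2 - 2 * l * (f x * h x) + l\<^sup>2 * (h x)\<^sup>2 \<partial>N)"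
    by (intro Bochner_Integration.integral_cong refl) (simp add: power2_eq_square algebra_simps)
  also have "\<dots> = (\<integral>x. (f x)\<^sup>2 \<partial>N) - 2 * l * (\<integral>x. f x * h x \<partial>N) + l\<^sup>2 * (\<integral>x. (h x)\<^sup>2 \<partial>N)"
    using i1 i2 i3 by simp
  finally show "0 \<le> (\<integral>x. (f x)\<^sup>2 \<partial>N) - 2 * l * (\<integral>x. f x * h x \<partial>N) + l\<^sup>2 * (\<integral>x. (h x)\<^sup>2 \<partial>N)" .
qed simp

lemma QQ_meas: "g \<in> borel_measurable (PiM {..<m} (\<lambda>_. lborel)) \<Longrightarrow> g \<in> borel_measurable (QQ \<sigma> m \<mu>)"
  using measurable_cong_sets[OF sets_QQ refl, of \<sigma> m \<mu> borel] by simp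

lemma LR_same: "0 < \<sigma> \<Longrightarrow> LR \<sigma> m \<mu>0 \<mu>0 y = 1"
  unfolding LR_def by (intro prod.neutral) (metis div_self normal_density_pos order_less_irrefl)

lemma LR_int1:
  assumes s: "0 < \<sigma>"
  shows "has_bochner_integral (QQ \<sigma> m \<mu>0) (LR \<sigma> m \<mu> \<mu>0) 1"
  using LR_LR_int[OF s, of m \<mu>0 \<mu> \<mu>0] by (simp add: LR_same[OF s])

lemma gLR:
  assumes s: "0 < \<sigma>" and gm: "g \<in> borel_measurable (PiM {..<m} (\<lambda>_. lborel))"
    and gi: "integrable (QQ \<sigma> m \<mu>) g"
  shows "integrable (QQ \<sigma> m \<mu>0) (\<lambda>y. LR \<sigma> m \<mu> \<mu>0 y * g y)"
    "(\<integral>y. LR \<sigma> m \<mu> \<mu>0 y * g y \<partial>QQ \<sigma> m \<mu>0) = (\<integral>y. g y \<partial>QQ \<sigma> m \<mu>)"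
proof -
  have d: "QQ \<sigma> m \<mu> = density (QQ \<sigma> m \<mu>0) (\<lambda>y. ennreal (LR \<sigma> m \<mu> \<mu>0 y))" by (rule QQ_density[OF s])
  have Lm: "LR \<sigma> m \<mu> \<mu>0 \<in> borel_measurable (QQ \<sigma> m \<mu>0)" by (rule QQ_meas) simp
  have gm': "g \<in> borel_measurable (QQ \<sigma> m \<mu>0)" by (rule QQ_meas[OF gm])
  show "integrable (QQ \<sigma> m \<mu>0) (\<lambda>y. LR \<sigma> m \<mu> \<mu>0 y * g y)"
    using gi unfolding d by (subst (asm) integrable_density[OF gm' Lm]) (auto simp: LR_nonneg)
  show "(\<integral>y. LR \<sigma> m \<mu> \<mu>0 y * g y \<partial>QQ \<sigma> m \<mu>0) = (\<integral>y. g y \<partial>QQ \<sigma> m \<mu>)"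
    unfolding d by (subst integral_density[OF gm' Lm]) (auto simp: LR_nonneg)
qed

lemma QQ_prob: "0 < \<sigma> \<Longrightarrow> prob_space (QQ \<sigma> m \<mu>)"
  unfolding QQ_def by (intro prob_space_PiM prob_space_normal_density)

lemma VB:
  fixes \<nu> :: "nat \<Rightarrow> nat \<Rightarrow> real" and w :: "nat \<Rightarrow> real"
  assumes s: "0 < \<sigma>" and gm: "g \<in> borel_measurable (PiM {..<m} (\<lambda>_. lborel))"
    and g0: "integrable (QQ \<sigma> m \<mu>0) g" and g2: "integrable (QQ \<sigma> m \<mu>0) (\<lambda>y. (g y)\<^sup>2)"
    and gj: "\<And>j. j < n \<Longrightarrow> integrable (QQ \<sigma> m (\<nu> j)) g"
  defines "m0 \<equiv> (\<integral>y. g y \<partial>QQ \<sigma> m \<mu>0)"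
  shows "(\<Sum>j<n. w j * ((\<integral>y. g y \<partial>QQ \<sigma> m (\<nu> j)) - m0))\<^sup>2
     \<le> (\<integral>y. (g y - m0)\<^sup>2 \<partial>QQ \<sigma> m \<mu>0) *
        (\<Sum>j<n. \<Sum>j'<n. w j * w j' * exp (\<Sum>i<m. (\<nu> j i - \<mu>0 i) * (\<nu> j' i - \<mu>0 i) / \<sigma>\<^sup>2))"
proof -
  interpret prob_space "QQ \<sigma> m \<mu>0" by (rule QQ_prob[OF s])
  define h where "h y = (\<Sum>j<n. w j * LR \<sigma> m (\<nu> j) \<mu>0 y)" for y
  have f2: "integrable (QQ \<sigma> m \<mu>0) (\<lambda>y. (g y - m0)\<^sup>2)"
  proof -
    have "integrable (QQ \<sigma> m \<mu>0) (\<lambda>y. (g y)\<^sup>2 - 2 * m0 * g y + m0\<^sup>2)"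
      using g0 g2 by auto
    then show ?thesis by (simp add: power2_diff algebra_simps)
  qed
  have hh: "(\<lambda>y. (h y)\<^sup>2) = (\<lambda>y. \<Sum>j<n. \<Sum>j'<n. w j * w j' * (LR \<sigma> m (\<nu> j) \<mu>0 y * LR \<sigma> m (\<nu> j') \<mu>0 y))"
    unfolding h_def power2_eq_square by (simp add: sum_product algebra_simps)
  have LLi: "integrable (QQ \<sigma> m \<mu>0) (\<lambda>y. LR \<sigma> m \<mu> \<mu>0 y * LR \<sigma> m \<mu>' \<mu>0 y)"
     "(\<integral>y. LR \<sigma> m \<mu> \<mu>0 y * LR \<sigma> m \<mu>' \<mu>0 y \<partial>QQ \<sigma> m \<mu>0) = exp (\<Sum>i<m. (\<mu> i - \<mu>0 i) * (\<mu>' i - \<mu>0 i) / \<sigma>\<^sup>2)" for \<mu> \<mu>'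
    using LR_LR_int[OF s, of m \<mu>0 \<mu> \<mu>'] by (auto simp: has_bochner_integral_iff)
  have h2: "integrable (QQ \<sigma> m \<mu>0) (\<lambda>y. (h y)\<^sup>2)"
    unfolding hh apply (rule Bochner_Integration.integrable_sum) apply (rule Bochner_Integration.integrable_sum) apply (rule integrable_mult_right) by (rule LLi)
  have ih2: "(\<integral>y. (h y)\<^sup>2 \<partial>QQ \<sigma> m \<mu>0) = (\<Sum>j<n. \<Sum>j'<n. w j * w j' * exp (\<Sum>i<m. (\<nu> j i - \<mu>0 i) * (\<nu> j' i - \<mu>0 i) / \<sigma>\<^sup>2))"
    unfolding hh by (simp add: integrable_mult_right integral_sum integrable_sum LLi)
  have fh: "(\<lambda>y. (g y - m0) * h y) = (\<lambda>y. \<Sum>j<n. w j * (LR \<sigma> m (\<nu> j) \<mu>0 y * g y - m0 * LR \<sigma> m (\<nu> j) \<mu>0 y))"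
    unfolding h_def by (simp add: sum_distrib_left algebra_simps)
  have L1: "integrable (QQ \<sigma> m \<mu>0) (LR \<sigma> m \<mu> \<mu>0)" "(\<integral>y. LR \<sigma> m \<mu> \<mu>0 y \<partial>QQ \<sigma> m \<mu>0) = 1" for \<mu>
    using LR_int1[OF s, of m \<mu>0 \<mu>] by (auto simp: has_bochner_integral_iff)
  have fhi: "integrable (QQ \<sigma> m \<mu>0) (\<lambda>y. (g y - m0) * h y)"
    unfolding fh using gLR(1)[OF s gm gj] L1 by (auto intro!: integrable_sum integrable_mult_right)
  have ifh: "(\<integral>y. (g y - m0) * h y \<partial>QQ \<sigma> m \<mu>0) = (\<Sum>j<n. w j * ((\<integral>y. g y \<partial>QQ \<sigma> m (\<nu> j)) - m0))"
    unfolding fh using gLR[OF s gm gj] L1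
    by (simp add: integral_sum integrable_sum integrable_mult_right)
  have "(\<integral>y. (g y - m0) * h y \<partial>QQ \<sigma> m \<mu>0)\<^sup>2 \<le> (\<integral>y. (g y - m0)\<^sup>2 \<partial>QQ \<sigma> m \<mu>0) * (\<integral>y. (h y)\<^sup>2 \<partial>QQ \<sigma> m \<mu>0)"
    by (rule CS_int[OF f2 h2 fhi])
  then show ?thesis unfolding ifh ih2 .
qed

lemma VB2:
  fixes \<nu> :: "nat \<Rightarrow> nat \<Rightarrow> real" and w :: "nat \<Rightarrow> real"
  assumes s: "0 < \<sigma>" and gm: "g \<in> borel_measurable (PiM {..<m} (\<lambda>_. lborel))"
    and g0: "integrable (QQ \<sigma> m \<mu>0) g" and g2: "integrable (QQ \<sigma> m \<mu>0) (\<lambda>y. (g y)\<^sup>2)"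
    and gj: "\<And>j. j < n \<Longrightarrow> integrable (QQ \<sigma> m (\<nu> j)) g"
    and gb: "integrable (QQ \<sigma> m \<nu>0) g"
  defines "m0 \<equiv> (\<integral>y. g y \<partial>QQ \<sigma> m \<mu>0)"
  defines "K \<equiv> (\<lambda>a b. exp (\<Sum>i<m. (a i - \<mu>0 i) * (b i - \<mu>0 i) / \<sigma>\<^sup>2))"
  shows "(\<Sum>j<n. w j * ((\<integral>y. g y \<partial>QQ \<sigma> m (\<nu> j)) - (\<integral>y. g y \<partial>QQ \<sigma> m \<nu>0)))\<^sup>2
     \<le> (\<integral>y. (g y - m0)\<^sup>2 \<partial>QQ \<sigma> m \<mu>0) *
        (\<Sum>j<n. \<Sum>j'<n. w j * w j' * (K (\<nu> j) (\<nu> j') - K (\<nu> j) \<nu>0 - K \<nu>0 (\<nu> j') + K \<nu>0 \<nu>0))"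
proof -
  interpret prob_space "QQ \<sigma> m \<mu>0" by (rule QQ_prob[OF s])
  define h where "h y = (\<Sum>j<n. w j * (LR \<sigma> m (\<nu> j) \<mu>0 y - LR \<sigma> m \<nu>0 \<mu>0 y))" for y
  have f2: "integrable (QQ \<sigma> m \<mu>0) (\<lambda>y. (g y - m0)\<^sup>2)"
  proof -
    have "integrable (QQ \<sigma> m \<mu>0) (\<lambda>y. (g y)\<^sup>2 - 2 * m0 * g y + m0\<^sup>2)"
      using g0 g2 by auto
    then show ?thesis by (simp add: power2_diff algebra_simps)
  qed
  define LL where "LL a b y = LR \<sigma> m a \<mu>0 y * LR \<sigma> m b \<mu>0 y" for a b y
  have hh: "(\<lambda>y. (h y)\<^sup>2) = (\<lambda>y. \<Sum>j<n. \<Sum>j'<n. w j * w j' *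
      (LL (\<nu> j) (\<nu> j') y - LL (\<nu> j) \<nu>0 y - LL \<nu>0 (\<nu> j') y + LL \<nu>0 \<nu>0 y))"
    unfolding h_def power2_eq_square LL_def by (simp add: sum_product algebra_simps)
  have LLi: "integrable (QQ \<sigma> m \<mu>0) (LL a b)" "(\<integral>y. LL a b y \<partial>QQ \<sigma> m \<mu>0) = K a b" for a b
    using LR_LR_int[OF s, of m \<mu>0 a b] unfolding LL_def K_def by (auto simp: has_bochner_integral_iff)
  have LLi4: "integrable (QQ \<sigma> m \<mu>0) (\<lambda>y. LL a b y - LL a c y - LL d b y + LL d c y)" for a b c d
    using LLi(1) by auto
  have h2: "integrable (QQ \<sigma> m \<mu>0) (\<lambda>y. (h y)\<^sup>2)"
    unfolding hh apply (rule Bochner_Integration.integrable_sum) apply (rule Bochner_Integration.integrable_sum)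
    apply (rule integrable_mult_right) by (rule LLi4)
  have ih2: "(\<integral>y. (h y)\<^sup>2 \<partial>QQ \<sigma> m \<mu>0) = (\<Sum>j<n. \<Sum>j'<n. w j * w j' * (K (\<nu> j) (\<nu> j') - K (\<nu> j) \<nu>0 - K \<nu>0 (\<nu> j') + K \<nu>0 \<nu>0))"
    unfolding hh by (simp add: integrable_mult_right integral_sum integrable_sum LLi LLi4)
  have fh: "(\<lambda>y. (g y - m0) * h y) = (\<lambda>y. \<Sum>j<n. w j * ((LR \<sigma> m (\<nu> j) \<mu>0 y * g y - m0 * LR \<sigma> m (\<nu> j) \<mu>0 y)
       - (LR \<sigma> m \<nu>0 \<mu>0 y * g y - m0 * LR \<sigma> m \<nu>0 \<mu>0 y)))"
    unfolding h_def by (simp add: sum_distrib_left algebra_simps)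
  have L1: "integrable (QQ \<sigma> m \<mu>0) (LR \<sigma> m \<mu> \<mu>0)" "(\<integral>y. LR \<sigma> m \<mu> \<mu>0 y \<partial>QQ \<sigma> m \<mu>0) = 1" for \<mu>
    using LR_int1[OF s, of m \<mu>0 \<mu>] by (auto simp: has_bochner_integral_iff)
  have fhi: "integrable (QQ \<sigma> m \<mu>0) (\<lambda>y. (g y - m0) * h y)"
    unfolding fh using gLR(1)[OF s gm gj] gLR(1)[OF s gm gb] L1
    apply (intro Bochner_Integration.integrable_sum integrable_mult_right) by auto
  have ifh: "(\<integral>y. (g y - m0) * h y \<partial>QQ \<sigma> m \<mu>0) = (\<Sum>j<n. w j * ((\<integral>y. g y \<partial>QQ \<sigma> m (\<nu> j)) - (\<integral>y. g y \<partial>QQ \<sigma> m \<nu>0)))"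
    unfolding fh using gLR[OF s gm gj] gLR[OF s gm gb] L1
    by (simp add: integral_sum integrable_sum integrable_mult_right)
  have "(\<integral>y. (g y - m0) * h y \<partial>QQ \<sigma> m \<mu>0)\<^sup>2 \<le> (\<integral>y. (g y - m0)\<^sup>2 \<partial>QQ \<sigma> m \<mu>0) * (\<integral>y. (h y)\<^sup>2 \<partial>QQ \<sigma> m \<mu>0)"
    by (rule CS_int[OF f2 h2 fhi])
  then show ?thesis unfolding ifh ih2 .
qed






lemma sqnorm_sum: "v \<bullet> v = (\<Sum>i<dim_vec v. (v $ i)\<^sup>2)" for v :: "real vec"
  unfolding scalar_prod_def by (simp add: power2_eq_square atLeast0LessThan)

lemma mv_bound:
  fixes H :: "real mat"
  assumes H: "H \<in> carrier_mat M N" and z: "z \<in> carrier_vec N"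
  shows "(H *\<^sub>v z) \<bullet> (H *\<^sub>v z) \<le> (\<Sum>i<M. \<Sum>j<N. (H $$ (i,j))\<^sup>2) * (z \<bullet> z)"
proof -
  have "(H *\<^sub>v z) \<bullet> (H *\<^sub>v z) = (\<Sum>i<M. (\<Sum>j<N. H $$ (i,j) * z $ j)\<^sup>2)"
    using H z unfolding sqnorm_sum power2_eq_square by (simp add: mult_mat_vec_def scalar_prod_def atLeast0LessThan)
  also have "\<dots> \<le> (\<Sum>i<M. (\<Sum>j<N. (H $$ (i,j))\<^sup>2) * (\<Sum>j<N. (z $ j)\<^sup>2))"
    by (intro sum_mono Cauchy_Schwarz_ineq_sum)
  also have "\<dots> = (\<Sum>i<M. \<Sum>j<N. (H $$ (i,j))\<^sup>2) * (z \<bullet> z)"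
    using z unfolding sqnorm_sum by (simp add: sum_distrib_right)
  finally show ?thesis .
qed

definition ripset :: "real mat \<Rightarrow> nat \<Rightarrow> real set" where
  "ripset H K = {\<delta>. \<delta> \<ge> 0 \<and>
     (\<forall>I. I \<subseteq> {..<dim_col H} \<and> card I = K \<longrightarrow>
        (\<forall>z \<in> carrier_vec (dim_col H). (\<forall>i<dim_col H. i \<notin> I \<longrightarrow> z $ i = 0) \<longrightarrow>
           (1 - \<delta>) * (scalar_prod z z) \<le> scalar_prod (H *\<^sub>v z) (H *\<^sub>v z) \<and>
           scalar_prod (H *\<^sub>v z) (H *\<^sub>v z) \<le> (1 + \<delta>) * (scalar_prod z z)))}"

lemma rip_const_ripset: "rip_const H K = Inf (ripset H K)"
  unfolding rip_const_def ripset_def ..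

lemma sq_nonneg': "0 \<le> z \<bullet> (z :: real vec)"
  unfolding sqnorm_sum by (intro sum_nonneg) auto

lemma ripset_ne:
  assumes H: "H \<in> carrier_mat M N"
  shows "max 1 (\<Sum>i<M. \<Sum>j<N. (H $$ (i,j))\<^sup>2) \<in> ripset H K"
proof -
  have "(1 - max 1 (\<Sum>i<M. \<Sum>j<N. (H $$ (i,j))\<^sup>2)) * (z \<bullet> z) \<le> (H *\<^sub>v z) \<bullet> (H *\<^sub>v z)" for z
  proof -
    have "(1 - max 1 (\<Sum>i<M. \<Sum>j<N. (H $$ (i,j))\<^sup>2)) * (z \<bullet> z) \<le> 0"
      by (intro mult_nonpos_nonneg sq_nonneg') auto
    also have "0 \<le> (H *\<^sub>v z) \<bullet> (H *\<^sub>v z)" by (rule sq_nonneg')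
    finally show ?thesis .
  qed
  moreover have "(H *\<^sub>v z) \<bullet> (H *\<^sub>v z) \<le> (1 + max 1 (\<Sum>i<M. \<Sum>j<N. (H $$ (i,j))\<^sup>2)) * (z \<bullet> z)"
    if "z \<in> carrier_vec N" for z
  proof -
    have "(H *\<^sub>v z) \<bullet> (H *\<^sub>v z) \<le> (\<Sum>i<M. \<Sum>j<N. (H $$ (i,j))\<^sup>2) * (z \<bullet> z)" by (rule mv_bound[OF H that])
    also have "\<dots> \<le> (1 + max 1 (\<Sum>i<M. \<Sum>j<N. (H $$ (i,j))\<^sup>2)) * (z \<bullet> z)"
      by (intro mult_right_mono sq_nonneg') auto
    finally show ?thesis .
  qed
  ultimately show ?thesis using H unfolding ripset_def by auto
qed

lemma rip_holds:
  fixes H :: "real mat"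
  assumes H: "H \<in> carrier_mat M N" and SN: "S \<le> N"
    and I: "I \<subseteq> {..<N}" "card I \<le> S" and z: "z \<in> carrier_vec N" "\<And>i. i < N \<Longrightarrow> i \<notin> I \<Longrightarrow> z $ i = 0"
  shows "(1 - rip_const H S) * (z \<bullet> z) \<le> (H *\<^sub>v z) \<bullet> (H *\<^sub>v z)"
    "(H *\<^sub>v z) \<bullet> (H *\<^sub>v z) \<le> (1 + rip_const H S) * (z \<bullet> z)"
proof -
  have fI: "finite I" using I(1) finite_subset by blast
  have "S - card I \<le> card ({..<N} - I)" using I fI SN by (simp add: card_Diff_subset)
  then obtain T where T: "T \<subseteq> {..<N} - I" "card T = S - card I" "finite T"
    by (rule obtain_subset_with_card_n)
  define I' where "I' = I \<union> T"
  have I': "I' \<subseteq> {..<N}" "card I' = S" "I \<subseteq> I'"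
  proof -
    have "I \<inter> T = {}" using T by auto
    then have "card (I \<union> T) = card I + card T" using fI T(3) by (simp add: card_Un_disjoint)
    then show "I' \<subseteq> {..<N}" "card I' = S" "I \<subseteq> I'" using T I unfolding I'_def by auto
  qed
  have dc: "dim_col H = N" using H by simp
  have rp: "(1 - d) * (z \<bullet> z) \<le> (H *\<^sub>v z) \<bullet> (H *\<^sub>v z) \<and> (H *\<^sub>v z) \<bullet> (H *\<^sub>v z) \<le> (1 + d) * (z \<bullet> z)"
    if "d \<in> ripset H S" for d
  proof -
    have "\<forall>i<N. i \<notin> I' \<longrightarrow> z $ i = 0" using z(2) I'(3) by auto
    then show ?thesis using that I' z(1) unfolding ripset_def dc by blast
  qed
  have ne: "ripset H S \<noteq> {}" using ripset_ne[OF H] by blast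
  have bdd: "bdd_below (ripset H S)" unfolding ripset_def by (rule bdd_belowI[of _ 0]) auto
  have approx: "\<exists>d \<in> ripset H S. d < rip_const H S + e" if "e > 0" for e
    unfolding rip_const_ripset using that ne by (intro cInf_lessD) auto
  have low: "rip_const H S \<le> d" if "d \<in> ripset H S" for d
    unfolding rip_const_ripset using that bdd by (rule cInf_lower)
  have zz: "0 \<le> z \<bullet> z" by (rule sq_nonneg')
  show "(1 - rip_const H S) * (z \<bullet> z) \<le> (H *\<^sub>v z) \<bullet> (H *\<^sub>v z)"
  proof (rule field_le_epsilon)
    fix e :: real assume e: "0 < e"
    then have e': "e / (z \<bullet> z + 1) > 0" using zz by simp
    obtain d where d: "d \<in> ripset H S" "d < rip_const H S + e / (z \<bullet> z + 1)" using approx[OF e'] by blast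
    have a: "d * (z \<bullet> z) \<le> (rip_const H S + e / (z \<bullet> z + 1)) * (z \<bullet> z)"
      using d(2) zz by (intro mult_right_mono) auto
    have b: "e / (z \<bullet> z + 1) * (z \<bullet> z) \<le> e" using zz e by (simp add: field_simps)
    have c: "(1 - d) * (z \<bullet> z) \<le> (H *\<^sub>v z) \<bullet> (H *\<^sub>v z)" using rp[OF d(1)] by simp
    have "(1 - rip_const H S) * (z \<bullet> z) \<le> (H *\<^sub>v z) \<bullet> (H *\<^sub>v z) + e"
      using a b c by (simp add: algebra_simps)
    then show "(1 - rip_const H S) * (z \<bullet> z) \<le> (H *\<^sub>v z) \<bullet> (H *\<^sub>v z) + e" by simp
  qed
  show "(H *\<^sub>v z) \<bullet> (H *\<^sub>v z) \<le> (1 + rip_const H S) * (z \<bullet> z)"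
  proof (rule field_le_epsilon)
    fix e :: real assume e: "0 < e"
    then have e': "e / (z \<bullet> z + 1) > 0" using zz by simp
    obtain d where d: "d \<in> ripset H S" "d < rip_const H S + e / (z \<bullet> z + 1)" using approx[OF e'] by blast
    have "(H *\<^sub>v z) \<bullet> (H *\<^sub>v z) \<le> (1 + d) * (z \<bullet> z)" using rp[OF d(1)] by simp
    also have "\<dots> \<le> (1 + rip_const H S) * (z \<bullet> z) + e / (z \<bullet> z + 1) * (z \<bullet> z)"
    proof -
      have "d * (z \<bullet> z) \<le> (rip_const H S + e / (z \<bullet> z + 1)) * (z \<bullet> z)"
        using d(2) zz by (intro mult_right_mono) auto
      then show ?thesis by (simp add: algebra_simps)
    qed
    also have "e / (z \<bullet> z + 1) * (z \<bullet> z) \<le> e" using zz e by (simp add: field_simps)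
    finally show "(H *\<^sub>v z) \<bullet> (H *\<^sub>v z) \<le> (1 + rip_const H S) * (z \<bullet> z) + e" by simp
  qed
qed

definition emb :: "nat \<Rightarrow> nat list \<Rightarrow> real vec \<Rightarrow> real vec" where
  "emb N ks z = vec N (\<lambda>j. if j \<in> set ks then z $ (THE i. i < length ks \<and> ks ! i = j) else 0)"

definition res :: "nat list \<Rightarrow> real vec \<Rightarrow> real vec" where
  "res ks x = vec (length ks) (\<lambda>i. x $ (ks ! i))"

lemma sum_over_ks:
  fixes f :: "nat \<Rightarrow> real"
  assumes d: "distinct ks" and s: "set ks \<subseteq> {..<N}" and z: "\<And>j. j < N \<Longrightarrow> j \<notin> set ks \<Longrightarrow> f j = 0"
  shows "(\<Sum>j\<in>{0..<N}. f j) = (\<Sum>i\<in>{0..<length ks}. f (ks ! i))"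
proof -
  have "(\<Sum>j\<in>{0..<N}. f j) = (\<Sum>j\<in>set ks. f j)"
    using s z by (intro sum.mono_neutral_right) auto
  also have "set ks = (\<lambda>i. ks ! i) ` {0..<length ks}" by (auto simp: set_conv_nth)
  also have "(\<Sum>j\<in>(\<lambda>i. ks ! i) ` {0..<length ks}. f j) = (\<Sum>i\<in>{0..<length ks}. f (ks ! i))"
    using d by (intro sum.reindex[unfolded comp_def]) (auto intro: inj_on_nth)
  finally show ?thesis .
qed

lemma HK_res:
  fixes H :: "real mat"
  assumes H: "H \<in> carrier_mat M N" and d: "distinct ks" and s: "set ks \<subseteq> {..<N}"
    and x: "x \<in> carrier_vec N" and z: "\<And>j. j < N \<Longrightarrow> j \<notin> set ks \<Longrightarrow> x $ j = 0"
  shows "H *\<^sub>v x = col_submat H ks *\<^sub>v res ks x"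
proof (rule eq_vecI)
  show "dim_vec (H *\<^sub>v x) = dim_vec (col_submat H ks *\<^sub>v res ks x)" using H by (simp add: col_submat_def)
  fix i assume "i < dim_vec (col_submat H ks *\<^sub>v res ks x)"
  then have i: "i < M" using H by (simp add: col_submat_def)
  have "(H *\<^sub>v x) $ i = (\<Sum>j\<in>{0..<N}. H $$ (i, j) * x $ j)"
    using H x i by (simp add: scalar_prod_def)
  also have "\<dots> = (\<Sum>j\<in>{0..<length ks}. H $$ (i, ks ! j) * x $ (ks ! j))"
    using z by (intro sum_over_ks[OF d s]) auto
  also have "\<dots> = (col_submat H ks *\<^sub>v res ks x) $ i"
    using H i by (simp add: col_submat_def res_def scalar_prod_def)
  finally show "(H *\<^sub>v x) $ i = (col_submat H ks *\<^sub>v res ks x) $ i" .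
qed

lemma emb_carrier[simp]: "emb N ks z \<in> carrier_vec N" by (simp add: emb_def)

lemma emb_dim[simp]: "dim_vec (emb N ks z) = N" by (simp add: emb_def)

lemma emb_zero: "j < N \<Longrightarrow> j \<notin> set ks \<Longrightarrow> emb N ks z $ j = 0" by (simp add: emb_def)

lemma emb_nth: "distinct ks \<Longrightarrow> set ks \<subseteq> {..<N} \<Longrightarrow> i < length ks \<Longrightarrow> emb N ks z $ (ks ! i) = z $ i"
proof -
  assume d: "distinct ks" and s: "set ks \<subseteq> {..<N}" and i: "i < length ks"
  have "(THE i'. i' < length ks \<and> ks ! i' = ks ! i) = i"
    using d i by (intro the_equality) (auto simp: nth_eq_iff_index_eq)
  moreover have "ks ! i < N" using s i by (meson lessThan_iff nth_mem subsetD)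
  ultimately show ?thesis using i by (simp add: emb_def)
qed

lemma res_emb: "distinct ks \<Longrightarrow> set ks \<subseteq> {..<N} \<Longrightarrow> z \<in> carrier_vec (length ks) \<Longrightarrow> res ks (emb N ks z) = z"
  by (intro eq_vecI) (auto simp: res_def emb_nth)

lemma sqnorm_zero: "v \<bullet> v = 0 \<Longrightarrow> v \<in> carrier_vec n \<Longrightarrow> v = 0\<^sub>v n" for v :: "real vec"
  unfolding sqnorm_sum by (intro eq_vecI) (auto simp: sum_nonneg_eq_0_iff)

locale LA =
  fixes H :: "real mat" and M N S :: nat and ks :: "nat list"
  assumes H: "H \<in> carrier_mat M N" and SN: "S \<le> N" and dks: "distinct ks"
    and sks: "set ks \<subseteq> {..<N}" and lks: "length ks \<le> S" and rip: "rip_const H S < 1"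
begin

lemma ks_lt: "i < length ks \<Longrightarrow> ks ! i < N"
  using sks nth_mem by blast

lemma HK_carrier[simp]: "col_submat H ks \<in> carrier_mat M (length ks)"
  using H by (simp add: col_submat_def)

lemma rip_K:
  assumes x: "x \<in> carrier_vec N" and z: "\<And>j. j < N \<Longrightarrow> j \<notin> set ks \<Longrightarrow> x $ j = 0"
  shows "(1 - rip_const H S) * (x \<bullet> x) \<le> (H *\<^sub>v x) \<bullet> (H *\<^sub>v x)"
  using rip_holds(1)[OF H SN sks _ x z] lks by (simp add: distinct_card[OF dks])

lemma H_inj_K:
  assumes x: "x \<in> carrier_vec N" and z: "\<And>j. j < N \<Longrightarrow> j \<notin> set ks \<Longrightarrow> x $ j = 0"
    and h: "H *\<^sub>v x = 0\<^sub>v M"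
  shows "x = 0\<^sub>v N"
proof -
  have "(1 - rip_const H S) * (x \<bullet> x) \<le> 0" using rip_K[OF x z] h by simp
  moreover have "0 < 1 - rip_const H S" using rip by simp
  moreover have "0 \<le> x \<bullet> x" by (rule sq_nonneg')
  ultimately have "x \<bullet> x = 0" by (simp add: mult_le_0_iff)
  then show ?thesis using x by (rule sqnorm_zero)
qed

lemma HK_inj:
  assumes a: "a \<in> carrier_vec (length ks)" and h: "col_submat H ks *\<^sub>v a = 0\<^sub>v M"
  shows "a = 0\<^sub>v (length ks)"
proof -
  have "H *\<^sub>v emb N ks a = col_submat H ks *\<^sub>v res ks (emb N ks a)"
    by (rule HK_res[OF H dks sks]) (auto simp: emb_zero)
  also have "\<dots> = 0\<^sub>v M" using res_emb[OF dks sks a] h by simp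
  finally have "emb N ks a = 0\<^sub>v N" by (intro H_inj_K) (auto simp: emb_zero)
  then have "res ks (emb N ks a) = res ks (0\<^sub>v N)" by simp
  moreover have "res ks (0\<^sub>v N) = 0\<^sub>v (length ks)"
    by (intro eq_vecI) (auto simp: res_def ks_lt)
  ultimately show ?thesis using res_emb[OF dks sks a] by simp
qed

definition "GG = transpose_mat (col_submat H ks) * col_submat H ks"

lemma HK_dims[simp]: "dim_row (col_submat H ks) = M" "dim_col (col_submat H ks) = length ks"
  using H by (simp_all add: col_submat_def)

lemma HKT_carrier[simp]: "transpose_mat (col_submat H ks) \<in> carrier_mat (length ks) M"
  by simp

lemma HKv_carrier[simp]: "a \<in> carrier_vec (length ks) \<Longrightarrow> col_submat H ks *\<^sub>v a \<in> carrier_vec M"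
  by (rule mult_mat_vec_carrier[OF HK_carrier])

lemma HKTv_carrier[simp]: "a \<in> carrier_vec M \<Longrightarrow> transpose_mat (col_submat H ks) *\<^sub>v a \<in> carrier_vec (length ks)"
  by (rule mult_mat_vec_carrier[OF HKT_carrier])

lemma GG_carrier[simp]: "GG \<in> carrier_mat (length ks) (length ks)"
  unfolding GG_def by (rule mult_carrier_mat[OF HKT_carrier HK_carrier])

lemma GG_sym: "transpose_mat GG = GG"
  unfolding GG_def by (subst transpose_mult[OF HKT_carrier HK_carrier]) simp

lemma quadG:
  assumes a: "a \<in> carrier_vec (length ks)"
  shows "a \<bullet> (GG *\<^sub>v a) = (col_submat H ks *\<^sub>v a) \<bullet> (col_submat H ks *\<^sub>v a)"
proof -
  have "GG *\<^sub>v a = transpose_mat (col_submat H ks) *\<^sub>v (col_submat H ks *\<^sub>v a)"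
    unfolding GG_def using a by (rule assoc_mult_mat_vec[OF HKT_carrier HK_carrier])
  have c2: "transpose_mat (col_submat H ks) *\<^sub>v (col_submat H ks *\<^sub>v a) \<in> carrier_vec (length ks)"
    by (rule mult_mat_vec_carrier[OF HKT_carrier mult_mat_vec_carrier[OF HK_carrier a]])
  then have "a \<bullet> (GG *\<^sub>v a) = (transpose_mat (col_submat H ks) *\<^sub>v (col_submat H ks *\<^sub>v a)) \<bullet> a"
    using \<open>GG *\<^sub>v a = _\<close> by (simp add: comm_scalar_prod[OF a c2])
  also have "\<dots> = (col_submat H ks *\<^sub>v a) \<bullet> (col_submat H ks *\<^sub>v a)"
    using a by (intro transpose_vec_mult_scalar[of _ M "length ks"]) auto
  finally show ?thesis .
qed

lemma GG_inv_ex: "\<exists>B \<in> carrier_mat (length ks) (length ks). GG * B = 1\<^sub>m (length ks) \<and> B * GG = 1\<^sub>m (length ks)"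
proof -
  have "det GG \<noteq> 0"
  proof
    assume "det GG = 0"
    then obtain v where v: "v \<in> carrier_vec (length ks)" "v \<noteq> 0\<^sub>v (length ks)" "GG *\<^sub>v v = 0\<^sub>v (length ks)"
      using det_0_iff_vec_prod_zero[OF GG_carrier] by blast
    have "(col_submat H ks *\<^sub>v v) \<bullet> (col_submat H ks *\<^sub>v v) = 0"
      using quadG[OF v(1)] v by simp
    then have "col_submat H ks *\<^sub>v v = 0\<^sub>v M" by (rule sqnorm_zero) (rule mult_mat_vec_carrier[OF HK_carrier v(1)])
    then have "v = 0\<^sub>v (length ks)" by (rule HK_inj[OF v(1)])
    with v(2) show False by simp
  qed
  then have "GG \<in> Units (ring_mat TYPE(real) (length ks) undefined)"
    by (rule det_non_zero_imp_unit[OF GG_carrier])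
  then show ?thesis unfolding Units_def ring_mat_def by auto
qed

lemma inv_unique:
  fixes A B C :: "real mat"
  assumes "A \<in> carrier_mat k k" "B \<in> carrier_mat k k" "C \<in> carrier_mat k k"
    "A * B = 1\<^sub>m k" "C * A = 1\<^sub>m k"
  shows "C = B"
proof -
  have "C = C * (A * B)" using right_mult_one_mat[OF assms(3)] assms(4) by simp
  also have "\<dots> = (C * A) * B" by (rule assoc_mult_mat[OF assms(3) assms(1) assms(2), symmetric])
  also have "\<dots> = B" using left_mult_one_mat[OF assms(2)] assms(5) by simp
  finally show ?thesis .
qed

definition "GI = inv_mat GG"

lemma GI: "GI \<in> carrier_mat (length ks) (length ks)" "GG * GI = 1\<^sub>m (length ks)" "GI * GG = 1\<^sub>m (length ks)"
proof -
  obtain B where B: "B \<in> carrier_mat (length ks) (length ks)" "GG * B = 1\<^sub>m (length ks)" "B * GG = 1\<^sub>m (length ks)"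
    using GG_inv_ex by blast
  have dr: "dim_row GG = length ks" by (rule carrier_matD(1)[OF GG_carrier])
  have "GI = B" unfolding GI_def inv_mat_def dr
  proof (rule the_equality)
    show "B \<in> carrier_mat (length ks) (length ks) \<and> GG * B = 1\<^sub>m (length ks) \<and> B * GG = 1\<^sub>m (length ks)" using B by simp
    fix C assume "C \<in> carrier_mat (length ks) (length ks) \<and> GG * C = 1\<^sub>m (length ks) \<and> C * GG = 1\<^sub>m (length ks)"
    then show "C = B" using B inv_unique[of GG "length ks" B C] by auto
  qed
  then show "GI \<in> carrier_mat (length ks) (length ks)" "GG * GI = 1\<^sub>m (length ks)" "GI * GG = 1\<^sub>m (length ks)" using B by auto
qed

lemma GI_sym: "transpose_mat GI = GI"
proof -
  have "transpose_mat GI * GG = 1\<^sub>m (length ks)"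
  proof -
    have "transpose_mat (GG * GI) = transpose_mat GI * transpose_mat GG"
      by (rule transpose_mult[OF GG_carrier GI(1)])
    then show ?thesis using GI(2) GG_sym by simp
  qed
  then show ?thesis using inv_unique[of GG "length ks" GI "transpose_mat GI"] GI by auto
qed

lemma pinv_eq: "pinv_mat (col_submat H ks) = GI * transpose_mat (col_submat H ks)"
proof -
  define K where "K = col_submat H ks"
  define T where "T = transpose_mat K"
  define n where "n = length ks"
  have K: "K \<in> carrier_mat M n" and T: "T \<in> carrier_mat n M" and G: "GI \<in> carrier_mat n n"
    and GGd: "GG = T * K" and GI1: "GI * GG = 1\<^sub>m n" and GI2: "GG * GI = 1\<^sub>m n"
    and GIs: "transpose_mat GI = GI"
    using GI GI_sym unfolding K_def T_def n_def GG_def by auto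
  have B0: "GI * T \<in> carrier_mat n M" using G T by simp
  have e0: "GI * T * K = 1\<^sub>m n"
    using GI1 unfolding GGd by (simp add: assoc_mult_mat[OF G T K])
  have e1: "K * (GI * T) * K = K"
  proof -
    have "K * (GI * T) * K = K * (GI * T * K)" by (rule assoc_mult_mat[OF K B0 K])
    also have "\<dots> = K" using e0 right_mult_one_mat[OF K] by simp
    finally show ?thesis .
  qed
  have e2: "GI * T * K * (GI * T) = GI * T" using e0 left_mult_one_mat[OF B0] by simp
  have e3: "transpose_mat (K * (GI * T)) = K * (GI * T)"
  proof -
    have "transpose_mat (K * (GI * T)) = transpose_mat (GI * T) * transpose_mat K"
      by (rule transpose_mult[OF K B0])
    also have "transpose_mat (GI * T) = transpose_mat T * transpose_mat GI"
      by (rule transpose_mult[OF G T])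
    also have "transpose_mat T * transpose_mat GI * transpose_mat K = K * GI * T"
      using GIs unfolding T_def by simp
    also have "\<dots> = K * (GI * T)" by (rule assoc_mult_mat[OF K G T])
    finally show ?thesis .
  qed
  have e4: "transpose_mat (GI * T * K) = GI * T * K" using e0 by simp
  have "pinv_mat K = GI * T"
    unfolding pinv_mat_def
  proof (rule the_equality)
    have dK: "dim_col K = n" "dim_row K = M" using K by auto
    show "GI * T \<in> carrier_mat (dim_col K) (dim_row K) \<and> K * (GI * T) * K = K \<and> GI * T * K * (GI * T) = GI * T \<and>
      transpose_mat (K * (GI * T)) = K * (GI * T) \<and> transpose_mat (GI * T * K) = GI * T * K"
      using B0 e1 e2 e3 e4 dK by simp
    fix B assume B: "B \<in> carrier_mat (dim_col K) (dim_row K) \<and> K * B * K = K \<and> B * K * B = B \<and>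
      transpose_mat (K * B) = K * B \<and> transpose_mat (B * K) = B * K"
    then have Bc: "B \<in> carrier_mat n M" using K by auto
    have KB: "K * B \<in> carrier_mat M M" using K Bc by simp
    have "T = transpose_mat (K * B * K)" using B unfolding T_def by simp
    also have "\<dots> = T * transpose_mat (K * B)" unfolding T_def by (rule transpose_mult[OF KB K])
    also have "\<dots> = T * (K * B)" using B by simp
    finally have TKB: "T = T * (K * B)" .
    have "GI * T = GI * (T * (K * B))" using TKB by simp
    also have "\<dots> = GI * ((T * K) * B)" using assoc_mult_mat[OF T K Bc] by simp
    also have "\<dots> = (GI * (T * K)) * B" using assoc_mult_mat[OF G _ Bc, of "T * K"] T K by simp
    also have "\<dots> = B" using GI1 unfolding GGd using left_mult_one_mat[OF Bc] by simp
    finally show "B = GI * T" by simp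
  qed
  then show ?thesis unfolding K_def T_def .
qed

definition "zz x0 = GI *\<^sub>v (transpose_mat (col_submat H ks) *\<^sub>v (H *\<^sub>v x0))"

lemma Hv_carrier[simp]: "x \<in> carrier_vec N \<Longrightarrow> H *\<^sub>v x \<in> carrier_vec M"
  by (rule mult_mat_vec_carrier[OF H])

lemma zz_carrier[simp]: "x0 \<in> carrier_vec N \<Longrightarrow> zz x0 \<in> carrier_vec (length ks)"
  unfolding zz_def by (rule mult_mat_vec_carrier[OF GI(1)]) simp

lemma H_emb: "z \<in> carrier_vec (length ks) \<Longrightarrow> H *\<^sub>v emb N ks z = col_submat H ks *\<^sub>v z"
  using HK_res[OF H dks sks emb_carrier[of N ks z]] res_emb[OF dks sks] by (simp add: emb_zero)

lemma GG_GI_v: "w \<in> carrier_vec (length ks) \<Longrightarrow> GG *\<^sub>v (GI *\<^sub>v w) = w"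
  using assoc_mult_mat_vec[OF GG_carrier GI(1), of w] GI(2) by simp

lemma HKT_HK_v: "z \<in> carrier_vec (length ks) \<Longrightarrow> transpose_mat (col_submat H ks) *\<^sub>v (col_submat H ks *\<^sub>v z) = GG *\<^sub>v z"
  unfolding GG_def by (rule assoc_mult_mat_vec[OF HKT_carrier HK_carrier, symmetric])

lemma xt_eq:
  assumes x0: "x0 \<in> carrier_vec N"
  shows "(THE x. x \<in> carrier_vec N \<and> supp_vec x \<subseteq> set ks \<and>
      H *\<^sub>v x = (col_submat H ks * pinv_mat (col_submat H ks)) *\<^sub>v (H *\<^sub>v x0)) = emb N ks (zz x0)"
proof (rule the_equality)
  have P: "(col_submat H ks * pinv_mat (col_submat H ks)) *\<^sub>v (H *\<^sub>v x0) = col_submat H ks *\<^sub>v zz x0"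
  proof -
    have c: "GI * transpose_mat (col_submat H ks) \<in> carrier_mat (length ks) M" using GI(1) by simp
    have "(col_submat H ks * pinv_mat (col_submat H ks)) *\<^sub>v (H *\<^sub>v x0)
        = col_submat H ks *\<^sub>v ((GI * transpose_mat (col_submat H ks)) *\<^sub>v (H *\<^sub>v x0))"
      unfolding pinv_eq using x0 by (intro assoc_mult_mat_vec[OF HK_carrier c]) simp
    also have "(GI * transpose_mat (col_submat H ks)) *\<^sub>v (H *\<^sub>v x0) = zz x0"
      unfolding zz_def using x0 by (intro assoc_mult_mat_vec[OF GI(1) HKT_carrier]) simp
    finally show ?thesis .
  qed
  show "emb N ks (zz x0) \<in> carrier_vec N \<and> supp_vec (emb N ks (zz x0)) \<subseteq> set ks \<and>
      H *\<^sub>v emb N ks (zz x0) = (col_submat H ks * pinv_mat (col_submat H ks)) *\<^sub>v (H *\<^sub>v x0)"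
    using P H_emb[OF zz_carrier[OF x0]] emb_zero[of _ N ks "zz x0"] by (auto simp: supp_vec_def)
  fix x assume xa: "x \<in> carrier_vec N \<and> supp_vec x \<subseteq> set ks \<and>
      H *\<^sub>v x = (col_submat H ks * pinv_mat (col_submat H ks)) *\<^sub>v (H *\<^sub>v x0)"
  define d where "d = x - emb N ks (zz x0)"
  have dc: "d \<in> carrier_vec N" unfolding d_def by (rule carrier_vecI) simp
  have dz: "d $ j = 0" if "j < N" "j \<notin> set ks" for j
    using xa that unfolding d_def by (auto simp: supp_vec_def emb_zero)
  have "H *\<^sub>v d = H *\<^sub>v x - H *\<^sub>v emb N ks (zz x0)"
    unfolding d_def using xa by (intro mult_minus_distrib_mat_vec[OF H]) auto
  also have "\<dots> = col_submat H ks *\<^sub>v zz x0 - col_submat H ks *\<^sub>v zz x0"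
    using xa P H_emb[OF zz_carrier[OF x0]] by simp
  also have "\<dots> = 0\<^sub>v M" using zz_carrier[OF x0] by (intro minus_cancel_vec) simp
  finally have "d = 0\<^sub>v N" by (intro H_inj_K[OF dc dz])
  then have xi: "x $ i = emb N ks (zz x0) $ i" if "i < N" for i
  proof -
    have "d $ i = 0" using \<open>d = 0\<^sub>v N\<close> that by simp
    then show ?thesis using that xa unfolding d_def by simp
  qed
  show "x = emb N ks (zz x0)" using xa xi by (intro eq_vecI) auto
qed

lemma ortho:
  assumes x0: "x0 \<in> carrier_vec N"
  shows "transpose_mat (col_submat H ks) *\<^sub>v (H *\<^sub>v emb N ks (zz x0) - H *\<^sub>v x0) = 0\<^sub>v (length ks)"
proof -
  have "transpose_mat (col_submat H ks) *\<^sub>v (H *\<^sub>v emb N ks (zz x0) - H *\<^sub>v x0)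
     = transpose_mat (col_submat H ks) *\<^sub>v (H *\<^sub>v emb N ks (zz x0)) - transpose_mat (col_submat H ks) *\<^sub>v (H *\<^sub>v x0)"
    using x0 by (intro mult_minus_distrib_mat_vec[OF HKT_carrier]) auto
  also have "transpose_mat (col_submat H ks) *\<^sub>v (H *\<^sub>v emb N ks (zz x0)) = transpose_mat (col_submat H ks) *\<^sub>v (H *\<^sub>v x0)"
    using H_emb[OF zz_carrier[OF x0]] HKT_HK_v[OF zz_carrier[OF x0]] GG_GI_v x0 unfolding zz_def by simp
  finally show ?thesis using x0 by simp
qed

end






lemma ev_at0: "\<forall>\<^sub>F t in at (0::real). t \<noteq> 0"
  by (simp add: eventually_at_filter)

lemma LIM_ineq:
  fixes Nn Dd :: "real \<Rightarrow> real"
  assumes h: "\<And>t. t \<noteq> 0 \<Longrightarrow> (Nn t)\<^sup>2 \<le> V * Dd t"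
    and n: "(Nn \<longlongrightarrow> N0) (at 0)" and d: "(Dd \<longlongrightarrow> D0) (at 0)"
  shows "N0\<^sup>2 \<le> V * D0"
proof (rule tendsto_le[of "at (0::real)"])
  show "at (0::real) \<noteq> bot" by simp
  show "((\<lambda>t. V * Dd t) \<longlongrightarrow> V * D0) (at 0)" by (intro tendsto_intros d)
  show "((\<lambda>t. (Nn t)\<^sup>2) \<longlongrightarrow> N0\<^sup>2) (at 0)" by (intro tendsto_intros n)
  show "\<forall>\<^sub>F t in at 0. (Nn t)\<^sup>2 \<le> V * Dd t" using ev_at0 by eventually_elim (rule h)
qed

lemma DLIM: "((\<lambda>t::real. (exp (t\<^sup>2 * c) - 1) / t\<^sup>2) \<longlongrightarrow> c) (at 0)"
proof -
  have "((\<lambda>s. exp (s * c)) has_field_derivative (exp (0 * c) * c)) (at 0)"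
    by (auto intro!: derivative_eq_intros)
  then have "((\<lambda>s. (exp (s * c) - exp (0 * c)) / (s - 0)) \<longlongrightarrow> c) (at 0)"
    unfolding has_field_derivative_iff by simp
  then have l1: "((\<lambda>s. (exp (s * c) - 1) / s) \<longlongrightarrow> c) (at 0)" by simp
  have l2: "filterlim (\<lambda>t::real. t\<^sup>2) (at 0) (at 0)"
  proof (rule filterlim_atI)
    show "((\<lambda>t::real. t\<^sup>2) \<longlongrightarrow> 0) (at 0)" by (rule tendsto_eq_intros) (auto intro: tendsto_eq_intros)
    show "\<forall>\<^sub>F t in at (0::real). t\<^sup>2 \<noteq> 0" using ev_at0 by eventually_elim simp
  qed
  show ?thesis using filterlim_compose[OF l1 l2] by (simp add: comp_def)
qed

lemma CLIM:
  assumes "has_partial_at c x l" and x: "x \<in> carrier_vec N"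
  shows "((\<lambda>t. (c (x + t \<cdot>\<^sub>v unit_vec N l) - c x) / t) \<longlongrightarrow> partial_at c x l) (at 0)"
proof -
  define f where "f t = c (x + t \<cdot>\<^sub>v unit_vec (dim_vec x) l)" for t
  have "f differentiable (at 0)" using assms(1) unfolding has_partial_at_def f_def .
  then have "(f has_field_derivative deriv f 0) (at 0)" by (simp add: DERIV_deriv_iff_real_differentiable)
  then have "((\<lambda>t. (f t - f 0) / (t - 0)) \<longlongrightarrow> deriv f 0) (at 0)"
    unfolding has_field_derivative_iff .
  moreover have "f 0 = c x"
  proof -
    have "x + 0 \<cdot>\<^sub>v unit_vec (dim_vec x) l = x" by (intro eq_vecI) auto
    then show ?thesis unfolding f_def by simp
  qed
  moreover have "dim_vec x = N" using x by simp
  ultimately show ?thesis unfolding partial_at_def f_def by simp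
qed

lemma sum_expand:
  fixes u p q :: "nat \<Rightarrow> real"
  shows "(\<Sum>i\<in>A. (u i + t * p i) * (u i + t * q i) / s) =
    (\<Sum>i\<in>A. u i * u i / s) + t / s * (\<Sum>i\<in>A. p i * u i) + t / s * (\<Sum>i\<in>A. q i * u i) + t\<^sup>2 * ((\<Sum>i\<in>A. p i * q i) / s)"
  by (simp add: sum.distrib sum_distrib_left sum_divide_distrib algebra_simps power2_eq_square add_divide_distrib)

lemma sum_expand1:
  fixes u p :: "nat \<Rightarrow> real"
  shows "(\<Sum>i\<in>A. (u i + t * p i) * u i / s) = (\<Sum>i\<in>A. u i * u i / s) + t / s * (\<Sum>i\<in>A. p i * u i)"
  by (simp add: sum.distrib sum_distrib_left sum_divide_distrib algebra_simps add_divide_distrib)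

lemma sum_expand2:
  fixes u p :: "nat \<Rightarrow> real"
  shows "(\<Sum>i\<in>A. u i * (u i + t * p i) / s) = (\<Sum>i\<in>A. u i * u i / s) + t / s * (\<Sum>i\<in>A. p i * u i)"
  by (simp add: sum.distrib sum_distrib_left sum_divide_distrib algebra_simps add_divide_distrib)

context LA
begin

lemma Hx_unit:
  assumes x: "x \<in> carrier_vec N" and l: "l < N" and i: "i < M"
  shows "(H *\<^sub>v (x + t \<cdot>\<^sub>v unit_vec N l)) $ i = (H *\<^sub>v x) $ i + t * H $$ (i, l)"
proof -
  have "H *\<^sub>v (x + t \<cdot>\<^sub>v unit_vec N l) = H *\<^sub>v x + H *\<^sub>v (t \<cdot>\<^sub>v unit_vec N l)"
    using x by (intro mult_add_distrib_mat_vec[OF H]) auto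
  also have "H *\<^sub>v (t \<cdot>\<^sub>v unit_vec N l) = t \<cdot>\<^sub>v (H *\<^sub>v unit_vec N l)"
    by (rule mult_mat_vec[OF H]) simp
  finally have e: "H *\<^sub>v (x + t \<cdot>\<^sub>v unit_vec N l) = H *\<^sub>v x + t \<cdot>\<^sub>v (H *\<^sub>v unit_vec N l)" .
  have "(H *\<^sub>v unit_vec N l) $ i = (\<Sum>j\<in>{0..<N}. H $$ (i, j) * (if j = l then 1 else 0))"
    using H i l by (simp add: scalar_prod_def)
  also have "\<dots> = H $$ (i, l)" using l by (simp add: if_distrib cong: if_cong)
  finally show ?thesis unfolding e using H i by simp
qed

lemma GG_entry:
  assumes "j < length ks" "j' < length ks"
  shows "GG $$ (j, j') = (\<Sum>i<M. col_submat H ks $$ (i, j) * col_submat H ks $$ (i, j'))"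
  using assms unfolding GG_def by (simp add: scalar_prod_def atLeast0LessThan)

lemma quad_sum:
  assumes a: "a \<in> carrier_vec (length ks)"
  shows "a \<bullet> (GG *\<^sub>v a) = (\<Sum>j<length ks. \<Sum>j'<length ks. a $ j * a $ j' * GG $$ (j, j'))"
proof -
  have d: "dim_row GG = length ks" "dim_col GG = length ks"
    using carrier_matD[OF GG_carrier] by auto
  show ?thesis using a d by (auto simp: scalar_prod_def atLeast0LessThan sum_distrib_left algebra_simps intro!: sum.cong)
qed

lemma ortho_sum:
  assumes x0: "x0 \<in> carrier_vec N" and j: "j < length ks"
  shows "(\<Sum>i<M. col_submat H ks $$ (i, j) * ((H *\<^sub>v emb N ks (zz x0)) $ i - (H *\<^sub>v x0) $ i)) = 0"
proof -
  have "(transpose_mat (col_submat H ks) *\<^sub>v (H *\<^sub>v emb N ks (zz x0) - H *\<^sub>v x0)) $ j = 0"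
    using ortho[OF x0] j by simp
  then show ?thesis using j x0 H by (simp add: scalar_prod_def atLeast0LessThan)
qed

lemma u_bound:
  assumes x0s: "x0 \<in> sparse_set N S"
  defines "r \<equiv> restrict_vec x0 (supp_vec x0 - set ks)"
  shows "(\<Sum>i<M. ((H *\<^sub>v emb N ks (zz x0)) $ i - (H *\<^sub>v x0) $ i)\<^sup>2) \<le> (1 + rip_const H S) * scalar_prod r r"
proof -
  have x0: "x0 \<in> carrier_vec N" and cs: "card (supp_vec x0) \<le> S" using x0s unfolding sparse_set_def by auto
  define y where "y = restrict_vec x0 (set ks)"
  have yc: "y \<in> carrier_vec N" and rc: "r \<in> carrier_vec N" using x0 unfolding y_def r_def restrict_vec_def by auto
  have x0yr: "x0 = y + r"
  proof (rule eq_vecI)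
    fix i assume "i < dim_vec (y + r)"
    then have i: "i < N" using rc by simp
    show "x0 $ i = (y + r) $ i" using i x0 rc yc unfolding y_def r_def restrict_vec_def supp_vec_def by auto
  qed (use x0 rc in simp)
  have Hx0: "H *\<^sub>v x0 = H *\<^sub>v y + H *\<^sub>v r" unfolding x0yr by (rule mult_add_distrib_mat_vec[OF H yc rc])
  have ysupp: "y $ j = 0" if "j < N" "j \<notin> set ks" for j using that x0 unfolding y_def restrict_vec_def by simp
  have Hy: "H *\<^sub>v y = col_submat H ks *\<^sub>v res ks y" by (rule HK_res[OF H dks sks yc ysupp])
  have Hxt: "H *\<^sub>v emb N ks (zz x0) = col_submat H ks *\<^sub>v zz x0" by (rule H_emb[OF zz_carrier[OF x0]])
  define u where "u i = (H *\<^sub>v emb N ks (zz x0)) $ i - (H *\<^sub>v x0) $ i" for i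
  define \<alpha> where "\<alpha> j = zz x0 $ j - res ks y $ j" for j
  define p where "p i = (\<Sum>j<length ks. col_submat H ks $$ (i, j) * \<alpha> j)" for i
  have resc: "res ks y \<in> carrier_vec (length ks)" by (simp add: res_def)
  have zc: "zz x0 \<in> carrier_vec (length ks)" using x0 by simp
  have w: "(H *\<^sub>v r) $ i = p i - u i" if i: "i < M" for i
  proof -
    have "(col_submat H ks *\<^sub>v zz x0) $ i - (col_submat H ks *\<^sub>v res ks y) $ i = p i"
      using i zc resc unfolding p_def \<alpha>_def
      by (simp add: scalar_prod_def atLeast0LessThan sum_subtractf[symmetric] algebra_simps)
    moreover have "(H *\<^sub>v x0) $ i = (H *\<^sub>v y) $ i + (H *\<^sub>v r) $ i" using Hx0 i H by simp
    ultimately show ?thesis unfolding u_def Hxt Hy using i by simp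
  qed
  have pu: "(\<Sum>i<M. p i * u i) = 0"
  proof -
    have "(\<Sum>i<M. p i * u i) = (\<Sum>j<length ks. \<alpha> j * (\<Sum>i<M. col_submat H ks $$ (i, j) * u i))"
      unfolding p_def by (simp add: sum_distrib_left sum_distrib_right algebra_simps sum.swap[of _ "{..<M}"])
    also have "\<dots> = 0" using ortho_sum[OF x0] unfolding u_def by simp
    finally show ?thesis .
  qed
  have "(\<Sum>i<M. (u i)\<^sup>2) \<le> (\<Sum>i<M. (p i - u i)\<^sup>2)"
  proof -
    have "(\<Sum>i<M. (p i - u i)\<^sup>2) = (\<Sum>i<M. (p i)\<^sup>2) - 2 * (\<Sum>i<M. p i * u i) + (\<Sum>i<M. (u i)\<^sup>2)"
      by (simp add: power2_diff sum.distrib sum_subtractf sum_distrib_left algebra_simps)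
    moreover have "0 \<le> (\<Sum>i<M. (p i)\<^sup>2)" by (intro sum_nonneg) auto
    ultimately show ?thesis using pu by simp
  qed
  also have "\<dots> = (H *\<^sub>v r) \<bullet> (H *\<^sub>v r)" using w H unfolding sqnorm_sum by simp
  also have "\<dots> \<le> (1 + rip_const H S) * (r \<bullet> r)"
  proof (rule rip_holds(2)[OF H SN _ _ rc])
    show "supp_vec x0 - set ks \<subseteq> {..<N}" using x0 unfolding supp_vec_def by auto
    have "finite (supp_vec x0)" unfolding supp_vec_def by simp
    then have "card (supp_vec x0 - set ks) \<le> card (supp_vec x0)" by (rule card_mono) auto
    then show "card (supp_vec x0 - set ks) \<le> S" using cs by simp
    show "\<And>i. i < N \<Longrightarrow> i \<notin> supp_vec x0 - set ks \<Longrightarrow> r $ i = 0"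
      using x0 unfolding r_def restrict_vec_def by auto
  qed
  finally show ?thesis unfolding u_def .
qed

lemma core:
  fixes \<sigma> :: real and k :: nat and x0 :: "real vec" and c :: "real vec \<Rightarrow> real"
    and g :: "(nat \<Rightarrow> real) \<Rightarrow> real"
  assumes s: "0 < \<sigma>" and kN: "k < N" and x0s: "x0 \<in> sparse_set N S"
    and gm: "g \<in> estimators (dim_row H)" and fv: "finite_var H \<sigma> g x0"
    and bias: "\<forall>x \<in> sparse_set N S. integrable (obs_dist H \<sigma> x) g \<and> est_bias H \<sigma> k g x = c x"
    and dpar: "\<forall>l \<in> set ks. has_partial_at c (emb N ks (zz x0)) l"
  defines "xt \<equiv> emb N ks (zz x0)"
  defines "b \<equiv> vec (length ks) (\<lambda>i. (if k = ks ! i then 1 else 0) + partial_at c xt (ks ! i))"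
  defines "r \<equiv> restrict_vec x0 (supp_vec x0 - set ks)"
  shows "exp (- (1 + rip_const H S) / \<sigma>\<^sup>2 * scalar_prod r r) * \<sigma>\<^sup>2 * scalar_prod b (inv_mat GG *\<^sub>v b)
     \<le> est_var H \<sigma> g x0"
proof -
  have x0: "x0 \<in> carrier_vec N" using x0s unfolding sparse_set_def by auto
  have dH: "dim_row H = M" using H by simp
  define mu where "mu x = (\<lambda>i. (H *\<^sub>v x) $ i)" for x
  have obs: "obs_dist H \<sigma> x = QQ \<sigma> M (mu x)" for x
    unfolding obs_dist_def QQ_def mu_def dH ..
  have mean: "integral\<^sup>L (QQ \<sigma> M (mu x)) g = x $ k + c x" if "x \<in> sparse_set N S" for x
    using bias that unfolding est_bias_def est_mean_def obs by auto
  have intg: "integrable (QQ \<sigma> M (mu x)) g" if "x \<in> sparse_set N S" for x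
    using bias that unfolding obs by auto
  have gm': "g \<in> borel_measurable (PiM {..<M} (\<lambda>_. lborel))" using gm unfolding estimators_def dH .
  have g0: "integrable (QQ \<sigma> M (mu x0)) g" and g2: "integrable (QQ \<sigma> M (mu x0)) (\<lambda>y. (g y)\<^sup>2)"
    using fv unfolding finite_var_def obs by auto
  have xtc: "xt \<in> carrier_vec N" unfolding xt_def by simp
  have xtz: "xt $ i = 0" if "i < N" "i \<notin> set ks" for i unfolding xt_def using that by (rule emb_zero)
  have card_ks: "card (set ks) \<le> S" using lks card_length le_trans by blast
  have sp: "xt + t \<cdot>\<^sub>v unit_vec N (ks ! j) \<in> sparse_set N S" if j: "j < length ks" for t j
  proof -
    have sub: "supp_vec (xt + t \<cdot>\<^sub>v unit_vec N (ks ! j)) \<subseteq> set ks"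
    proof
      fix x assume "x \<in> supp_vec (xt + t \<cdot>\<^sub>v unit_vec N (ks ! j))"
      then have x: "x < N" "xt $ x + t * (if x = ks ! j then 1 else 0) \<noteq> 0"
        using ks_lt[OF j] xtc unfolding supp_vec_def by auto
      show "x \<in> set ks"
      proof (cases "x = ks ! j")
        case True then show ?thesis using j by simp
      next
        case False then show ?thesis using x xtz by fastforce
      qed
    qed
    then have "card (supp_vec (xt + t \<cdot>\<^sub>v unit_vec N (ks ! j))) \<le> card (set ks)" by (intro card_mono) auto
    then show ?thesis using card_ks xtc unfolding sparse_set_def by auto
  qed
  have spt: "xt \<in> sparse_set N S"
  proof -
    have "xt + 0 \<cdot>\<^sub>v unit_vec N 0 = xt" using xtc by (intro eq_vecI) auto
    show ?thesis
    proof (cases "ks = []")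
      case True
      have "supp_vec xt = {}" using xtz True unfolding supp_vec_def using xtc by auto
      then show ?thesis using xtc unfolding sparse_set_def by auto
    next
      case False
      then have "0 < length ks" by simp
      from sp[OF this, of 0] have "xt + 0 \<cdot>\<^sub>v unit_vec N (ks ! 0) \<in> sparse_set N S" .
      moreover have "xt + 0 \<cdot>\<^sub>v unit_vec N (ks ! 0) = xt" using xtc by (intro eq_vecI) auto
      ultimately show ?thesis by simp
    qed
  qed
  have bc: "b \<in> carrier_vec (length ks)" unfolding b_def by simp
  define a where "a = GI *\<^sub>v b"
  have ac: "a \<in> carrier_vec (length ks)" unfolding a_def by (rule mult_mat_vec_carrier[OF GI(1) bc])
  have Ga: "GG *\<^sub>v a = b" unfolding a_def by (rule GG_GI_v[OF bc])
  define q where "q = a \<bullet> b"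
  have q_quad: "q = a \<bullet> (GG *\<^sub>v a)" unfolding q_def Ga ..
  have q_nonneg: "0 \<le> q" unfolding q_quad quadG[OF ac] by (rule sq_nonneg')
  have rhs: "scalar_prod b (inv_mat GG *\<^sub>v b) = q"
    unfolding q_def GI_def[symmetric] a_def[symmetric] by (rule comm_scalar_prod[OF bc ac])
  define m0 where "m0 = integral\<^sup>L (QQ \<sigma> M (mu x0)) g"
  define Var where "Var = (\<integral>y. (g y - m0)\<^sup>2 \<partial>QQ \<sigma> M (mu x0))"
  have Var: "est_var H \<sigma> g x0 = Var" unfolding Var_def m0_def est_var_def est_mean_def obs ..
  have Var_nonneg: "0 \<le> Var" unfolding Var_def by simp
  define u where "u i = (H *\<^sub>v xt) $ i - (H *\<^sub>v x0) $ i" for i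
  define Us where "Us = (\<Sum>i<M. u i * u i / \<sigma>\<^sup>2)"
  define Gm where "Gm j j' = GG $$ (j, j')" for j j'
  define Nn where "Nn t = (\<Sum>j<length ks. a $ j * ((if k = ks ! j then 1 else 0) + (c (xt + t \<cdot>\<^sub>v unit_vec N (ks ! j)) - c xt) / t))" for t
  define Dd where "Dd t = (\<Sum>j<length ks. \<Sum>j'<length ks. a $ j * a $ j' * exp Us * ((exp (t\<^sup>2 * (Gm j j' / \<sigma>\<^sup>2)) - 1) / t\<^sup>2))" for t
  have key: "(Nn t)\<^sup>2 \<le> Var * Dd t" if t: "t \<noteq> 0" for t
  proof -
    define \<nu> where "\<nu> j = mu (xt + t \<cdot>\<^sub>v unit_vec N (ks ! j))" for j
    define w where "w j = a $ j / t" for j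
    define K where "K = (\<lambda>a' b'. exp (\<Sum>i<M. (a' i - mu x0 i) * (b' i - mu x0 i) / \<sigma>\<^sup>2))"
    have gj: "integrable (QQ \<sigma> M (\<nu> j)) g" if "j < length ks" for j
      unfolding \<nu>_def by (rule intg[OF sp[OF that]])
    have vb: "(\<Sum>j<length ks. w j * (integral\<^sup>L (QQ \<sigma> M (\<nu> j)) g - integral\<^sup>L (QQ \<sigma> M (mu xt)) g))\<^sup>2
      \<le> Var * (\<Sum>j<length ks. \<Sum>j'<length ks. w j * w j' * (K (\<nu> j) (\<nu> j') - K (\<nu> j) (mu xt) - K (mu xt) (\<nu> j') + K (mu xt) (mu xt)))"
      unfolding Var_def m0_def K_def by (rule VB2[OF s gm' g0 g2 gj intg[OF spt]])
    have HKe: "col_submat H ks $$ (i, j) = H $$ (i, ks ! j)" if "i < M" "j < length ks" for i j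
      using that H unfolding col_submat_def by simp
    have nu: "\<nu> j i - mu x0 i = u i + t * col_submat H ks $$ (i, j)" if j: "j < length ks" and i: "i < M" for i j
      unfolding \<nu>_def mu_def u_def using Hx_unit[OF xtc ks_lt[OF j] i] HKe[OF i j] by simp
    have xtu: "mu xt i - mu x0 i = u i" for i unfolding mu_def u_def ..
    have ort: "(\<Sum>i<M. col_submat H ks $$ (i, j) * u i) = 0" if "j < length ks" for j
      using ortho_sum[OF x0 that] unfolding u_def xt_def .
    have K1: "K (\<nu> j) (\<nu> j') = exp Us * exp (t\<^sup>2 * (Gm j j' / \<sigma>\<^sup>2))" if "j < length ks" "j' < length ks" for j j'
    proof -
      have "(\<Sum>i<M. (\<nu> j i - mu x0 i) * (\<nu> j' i - mu x0 i) / \<sigma>\<^sup>2)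
          = (\<Sum>i<M. (u i + t * col_submat H ks $$ (i, j)) * (u i + t * col_submat H ks $$ (i, j')) / \<sigma>\<^sup>2)"
        using nu that by (intro sum.cong) auto
      also have "\<dots> = Us + t\<^sup>2 * (Gm j j' / \<sigma>\<^sup>2)"
        unfolding sum_expand using ort that unfolding Us_def Gm_def GG_entry[OF that] by simp
      finally show ?thesis unfolding K_def by (simp add: exp_add)
    qed
    have K2: "K (\<nu> j) (mu xt) = exp Us" if "j < length ks" for j
    proof -
      have "(\<Sum>i<M. (\<nu> j i - mu x0 i) * (mu xt i - mu x0 i) / \<sigma>\<^sup>2)
          = (\<Sum>i<M. (u i + t * col_submat H ks $$ (i, j)) * u i / \<sigma>\<^sup>2)"
        using nu that xtu by (intro sum.cong) auto
      also have "\<dots> = Us" unfolding sum_expand1 using ort that unfolding Us_def by simp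
      finally show ?thesis unfolding K_def by simp
    qed
    have K3: "K (mu xt) (\<nu> j) = exp Us" if "j < length ks" for j
    proof -
      have "(\<Sum>i<M. (mu xt i - mu x0 i) * (\<nu> j i - mu x0 i) / \<sigma>\<^sup>2)
          = (\<Sum>i<M. u i * (u i + t * col_submat H ks $$ (i, j)) / \<sigma>\<^sup>2)"
        using nu that xtu by (intro sum.cong) auto
      also have "\<dots> = Us" unfolding sum_expand2 using ort that unfolding Us_def by simp
      finally show ?thesis unfolding K_def by simp
    qed
    have K4: "K (mu xt) (mu xt) = exp Us" unfolding K_def Us_def xtu ..
    have rhs_eq: "(\<Sum>j<length ks. \<Sum>j'<length ks. w j * w j' * (K (\<nu> j) (\<nu> j') - K (\<nu> j) (mu xt) - K (mu xt) (\<nu> j') + K (mu xt) (mu xt)))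
        = Dd t"
      unfolding Dd_def
    proof (intro sum.cong refl)
      fix j j' assume "j \<in> {..<length ks}" "j' \<in> {..<length ks}"
      then have jj: "j < length ks" "j' < length ks" by auto
      show "w j * w j' * (K (\<nu> j) (\<nu> j') - K (\<nu> j) (mu xt) - K (mu xt) (\<nu> j') + K (mu xt) (mu xt))
         = a $ j * a $ j' * exp Us * ((exp (t\<^sup>2 * (Gm j j' / \<sigma>\<^sup>2)) - 1) / t\<^sup>2)"
        unfolding K1[OF jj] K2[OF jj(1)] K3[OF jj(2)] K4 w_def using t
        by (simp add: field_simps power2_eq_square)
    qed
    have lhs_eq: "(\<Sum>j<length ks. w j * (integral\<^sup>L (QQ \<sigma> M (\<nu> j)) g - integral\<^sup>L (QQ \<sigma> M (mu xt)) g)) = Nn t"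
      unfolding Nn_def
    proof (intro sum.cong refl)
      fix j assume "j \<in> {..<length ks}"
      then have j: "j < length ks" by auto
      have e: "(xt + t \<cdot>\<^sub>v unit_vec N (ks ! j)) $ k = xt $ k + t * (if k = ks ! j then 1 else 0)"
        using kN ks_lt[OF j] xtc by simp
      show "w j * (integral\<^sup>L (QQ \<sigma> M (\<nu> j)) g - integral\<^sup>L (QQ \<sigma> M (mu xt)) g)
        = a $ j * ((if k = ks ! j then 1 else 0) + (c (xt + t \<cdot>\<^sub>v unit_vec N (ks ! j)) - c xt) / t)"
        unfolding \<nu>_def mean[OF sp[OF j]] mean[OF spt] e w_def using t
        by (simp add: field_simps)
    qed
    show ?thesis using vb unfolding rhs_eq lhs_eq .
  qed
  have limN: "(Nn \<longlongrightarrow> (\<Sum>j<length ks. a $ j * b $ j)) (at 0)"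
  proof -
    have bsum: "(\<Sum>j<length ks. a $ j * b $ j) = (\<Sum>j<length ks. a $ j * ((if k = ks ! j then 1 else 0) + partial_at c xt (ks ! j)))"
      by (intro sum.cong) (auto simp: b_def)
    have "((\<lambda>t. (\<Sum>j<length ks. a $ j * ((if k = ks ! j then 1 else 0) + (c (xt + t \<cdot>\<^sub>v unit_vec N (ks ! j)) - c xt) / t)))
       \<longlongrightarrow> (\<Sum>j<length ks. a $ j * ((if k = ks ! j then 1 else 0) + partial_at c xt (ks ! j)))) (at 0)"
    proof (intro tendsto_sum tendsto_mult_left tendsto_add tendsto_const)
      fix j assume "j \<in> {..<length ks}"
      then have "has_partial_at c xt (ks ! j)" using dpar unfolding xt_def by simp
      then show "((\<lambda>t. (c (xt + t \<cdot>\<^sub>v unit_vec N (ks ! j)) - c xt) / t) \<longlongrightarrow> partial_at c xt (ks ! j)) (at 0)"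
        by (rule CLIM[OF _ xtc])
    qed
    then show ?thesis unfolding bsum Nn_def .
  qed
  have limD: "(Dd \<longlongrightarrow> (\<Sum>j<length ks. \<Sum>j'<length ks. a $ j * a $ j' * exp Us * (Gm j j' / \<sigma>\<^sup>2))) (at 0)"
    unfolding Dd_def by (intro tendsto_sum tendsto_mult_left DLIM)
  have main: "(\<Sum>j<length ks. a $ j * b $ j)\<^sup>2 \<le> Var * (\<Sum>j<length ks. \<Sum>j'<length ks. a $ j * a $ j' * exp Us * (Gm j j' / \<sigma>\<^sup>2))"
    by (rule LIM_ineq[OF key limN limD])
  have e1: "(\<Sum>j<length ks. a $ j * b $ j) = q" unfolding q_def scalar_prod_def using bc by (simp add: atLeast0LessThan)
  have e2: "(\<Sum>j<length ks. \<Sum>j'<length ks. a $ j * a $ j' * exp Us * (Gm j j' / \<sigma>\<^sup>2)) = exp Us / \<sigma>\<^sup>2 * q"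
    unfolding q_quad quad_sum[OF ac] Gm_def by (simp add: sum_distrib_left algebra_simps)
  have qineq: "q\<^sup>2 \<le> Var * (exp Us / \<sigma>\<^sup>2 * q)" using main unfolding e1 e2 .
  have Us_le: "Us \<le> (1 + rip_const H S) / \<sigma>\<^sup>2 * scalar_prod r r"
  proof -
    have "Us = (\<Sum>i<M. (u i)\<^sup>2) / \<sigma>\<^sup>2" unfolding Us_def by (simp add: sum_divide_distrib power2_eq_square)
    also have "\<dots> \<le> (1 + rip_const H S) * scalar_prod r r / \<sigma>\<^sup>2"
      using u_bound[OF x0s] s unfolding u_def xt_def r_def by (intro divide_right_mono) auto
    finally show ?thesis by simp
  qed
  show ?thesis unfolding rhs Var
  proof (cases "q = 0")
    case True then show "exp (- (1 + rip_const H S) / \<sigma>\<^sup>2 * scalar_prod r r) * \<sigma>\<^sup>2 * q \<le> Var"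
      using Var_nonneg by simp
  next
    case False
    then have qp: "0 < q" using q_nonneg by simp
    have "q * q \<le> (Var * exp Us / \<sigma>\<^sup>2) * q" using qineq by (simp add: power2_eq_square algebra_simps)
    then have "q \<le> Var * exp Us / \<sigma>\<^sup>2" using qp by (rule mult_right_le_imp_le)
    then have "exp (- Us) * \<sigma>\<^sup>2 * q \<le> Var" using s by (simp add: field_simps exp_minus)
    moreover have "exp (- (1 + rip_const H S) / \<sigma>\<^sup>2 * scalar_prod r r) \<le> exp (- Us)"
    proof -
      have "- (1 + rip_const H S) / \<sigma>\<^sup>2 * scalar_prod r r = - ((1 + rip_const H S) / \<sigma>\<^sup>2 * scalar_prod r r)"
        by (simp only: minus_divide_left[symmetric] mult_minus_left)
      then show ?thesis using Us_le by (simp only: exp_le_cancel_iff)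
    qed
    ultimately show "exp (- (1 + rip_const H S) / \<sigma>\<^sup>2 * scalar_prod r r) * \<sigma>\<^sup>2 * q \<le> Var"
      using qp s by (smt (verit, best) mult_right_mono zero_le_power2 mult_nonneg_nonneg)
  qed
qed

end


theorem theorem9:
  fixes M N S k :: nat and \<sigma> :: real and H :: "real mat" and x0 :: "real vec"
    and ks :: "nat list" and c :: "real vec \<Rightarrow> real"
  assumes "1 \<le> S" "S \<le> N" "M \<le> N" "\<sigma> > 0" "k < N"
    and "H \<in> carrier_mat M N"
    and "rip_const H S < 1"
    and "x0 \<in> sparse_set N S"
    and "distinct ks" "set ks \<subseteq> {..<N}" "length ks \<le> S"
  defines "HK \<equiv> col_submat H ks"
  defines "P \<equiv> HK * pinv_mat HK"
  defines "xt \<equiv> (THE x. x \<in> carrier_vec N \<and> supp_vec x \<subseteq> set ks \<and> H *\<^sub>v x = P *\<^sub>v (H *\<^sub>v x0))"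
  assumes "\<forall>l \<in> set ks. has_partial_at c xt l"
  defines "b \<equiv> vec (length ks) (\<lambda>i. (if k = ks ! i then 1 else 0) + partial_at c xt (ks ! i))"
  defines "r \<equiv> restrict_vec x0 (supp_vec x0 - set ks)"
  shows "min_var H \<sigma> S k c x0 \<ge>
     ereal (exp (- (1 + rip_const H S) / \<sigma>\<^sup>2 * (scalar_prod r r)) * \<sigma>\<^sup>2 *
            (scalar_prod b (inv_mat (transpose_mat HK * HK) *\<^sub>v b)))"
proof -
  interpret LA H M N S ks using assms by unfold_locales auto
  have x0: "x0 \<in> carrier_vec N" using assms(8) unfolding sparse_set_def by auto
  have xt: "xt = emb N ks (zz x0)" unfolding xt_def P_def HK_def by (rule xt_eq[OF x0])
  have G: "transpose_mat HK * HK = GG" unfolding HK_def GG_def ..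
  show ?thesis unfolding min_var_def G
  proof (rule Inf_greatest)
    fix e assume "e \<in> (\<lambda>g. ereal (est_var H \<sigma> g x0)) ` {g \<in> estimators (dim_row H). finite_var H \<sigma> g x0 \<and>
        (\<forall>x \<in> sparse_set (dim_col H) S. integrable (obs_dist H \<sigma> x) g \<and> est_bias H \<sigma> k g x = c x)}"
    then obtain g where g: "g \<in> estimators (dim_row H)" "finite_var H \<sigma> g x0"
        "\<forall>x \<in> sparse_set N S. integrable (obs_dist H \<sigma> x) g \<and> est_bias H \<sigma> k g x = c x"
      and e: "e = ereal (est_var H \<sigma> g x0)" using assms(6) by auto
    have "exp (- (1 + rip_const H S) / \<sigma>\<^sup>2 * scalar_prod r r) * \<sigma>\<^sup>2 * scalar_prod b (inv_mat GG *\<^sub>v b)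
       \<le> est_var H \<sigma> g x0"
      unfolding b_def r_def xt
      by (rule core[OF assms(4) assms(5) assms(8) g]) (use \<open>\<forall>l \<in> set ks. has_partial_at c xt l\<close> xt in simp)
    then show "ereal (exp (- (1 + rip_const H S) / \<sigma>\<^sup>2 * scalar_prod r r) * \<sigma>\<^sup>2 * scalar_prod b (inv_mat GG *\<^sub>v b)) \<le> e"
      unfolding e by simp
  qed
qed

end
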